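(* Let $t\ge 2$. Every $(t,t)$AH-plane $\mathcal{K}$ is a sub-geometry of a $(t,t)$PH-plane: there exist a $(t,t)$PH-plane $\mathcal{H}$ and a line-neighbourhood $N$ of $\mathcal{H}$ such that the incidence structure obtained from $\mathcal{H}$ by deleting all lines in $N$ and all points incident with some line of $N$ (and restricting the remaining lines to the remaining points) is isomorphic to $\mathcal{K}$.
   Context: Projective Hjelmslev plane: an incidence structure $\mathcal{H}$ such that (1) any two points are incident with at least one line; (2) any two lines meet in at least one point; (3) two lines meeting in more than one point are called neighbours; (4) two points incident with more than one common line are called neighbours; (5) there is an incidence-preserving surjection $\phi$ from $\mathcal{H}$ onto an ordinary projective plane with $\phi(P)=\phi(Q)\iff P\sim Q$ for points and $\phi(g)=\phi(h)\iff g\sim h$ for lines (where $\sim$ is the neighbour relation, reflexively extended; it is an equivalence relation, whose classes on lines are called line-neighbourhoods). A $(t,r)$PH-plane is a projective Hjelmslev plane in which each line has $t(r+1)$ points and, for each point $P$ on a line $g$, exactly $t$ points of $g$ are neighbours of $P$ (including $P$). Affine Hjelmslev plane: an incidence structure such that any two points are incident with at least one line, lines meeting in more than one point are neighbours, points incident with more than one common line are neighbours, and there is an incidence-preserving surjection $\phi$ onto an ordinary affine plane with $\phi(P)=\phi(Q)\iff P\sim Q$, $\phi(g)=\phi(h)\iff g\sim h$, and lines with no common point mapped to parallel lines. A $(t,r)$AH-plane is an affine Hjelmslev plane in which each line has $rt$ points and, for each point $P$ on a line $g$, exactly $t$ points of $g$ are neighbours of $P$ (including $P$). *)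

theory Defs
  imports Main
begin

text \<open>Incidence structures are given by a point set P, a line set L and an
incidence predicate I (only its values on P x L matter).\<close>

definition collinear3 :: "'l set \<Rightarrow> ('p \<Rightarrow> 'l \<Rightarrow> bool) \<Rightarrow> 'p \<Rightarrow> 'p \<Rightarrow> 'p \<Rightarrow> bool" where
  "collinear3 L I a b c \<longleftrightarrow> (\<exists>g\<in>L. I a g \<and> I b g \<and> I c g)"

definition proj_plane :: "'p set \<Rightarrow> 'l set \<Rightarrow> ('p \<Rightarrow> 'l \<Rightarrow> bool) \<Rightarrow> bool" where
  "proj_plane P L I \<longleftrightarrow>
     (\<forall>p\<in>P. \<forall>q\<in>P. p \<noteq> q \<longrightarrow> (\<exists>!g. g \<in> L \<and> I p g \<and> I q g)) \<and>
     (\<forall>g\<in>L. \<forall>h\<in>L. g \<noteq> h \<longrightarrow> (\<exists>!p. p \<in> P \<and> I p g \<and> I p h)) \<and>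
     (\<exists>a\<in>P. \<exists>b\<in>P. \<exists>c\<in>P. \<exists>d\<in>P. distinct [a, b, c, d] \<and>
        \<not> collinear3 L I a b c \<and> \<not> collinear3 L I a b d \<and>
        \<not> collinear3 L I a c d \<and> \<not> collinear3 L I b c d)"

definition aff_parallel :: "'p set \<Rightarrow> ('p \<Rightarrow> 'l \<Rightarrow> bool) \<Rightarrow> 'l \<Rightarrow> 'l \<Rightarrow> bool" where
  "aff_parallel P I g h \<longleftrightarrow> g = h \<or> \<not> (\<exists>p\<in>P. I p g \<and> I p h)"

definition affine_plane :: "'p set \<Rightarrow> 'l set \<Rightarrow> ('p \<Rightarrow> 'l \<Rightarrow> bool) \<Rightarrow> bool" where
  "affine_plane P L I \<longleftrightarrow>
     (\<forall>p\<in>P. \<forall>q\<in>P. p \<noteq> q \<longrightarrow> (\<exists>!g. g \<in> L \<and> I p g \<and> I q g)) \<and>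
     (\<forall>p\<in>P. \<forall>g\<in>L. \<not> I p g \<longrightarrow> (\<exists>!h. h \<in> L \<and> I p h \<and> aff_parallel P I g h)) \<and>
     (\<exists>a\<in>P. \<exists>b\<in>P. \<exists>c\<in>P. distinct [a, b, c] \<and> \<not> collinear3 L I a b c)"

definition pt_nb :: "'p set \<Rightarrow> 'l set \<Rightarrow> ('p \<Rightarrow> 'l \<Rightarrow> bool) \<Rightarrow> 'p \<Rightarrow> 'p \<Rightarrow> bool" where
  "pt_nb P L I p q \<longleftrightarrow> p = q \<or>
     (\<exists>g\<in>L. \<exists>h\<in>L. g \<noteq> h \<and> I p g \<and> I q g \<and> I p h \<and> I q h)"

definition ln_nb :: "'p set \<Rightarrow> 'l set \<Rightarrow> ('p \<Rightarrow> 'l \<Rightarrow> bool) \<Rightarrow> 'l \<Rightarrow> 'l \<Rightarrow> bool" where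
  "ln_nb P L I g h \<longleftrightarrow> g = h \<or>
     (\<exists>p\<in>P. \<exists>q\<in>P. p \<noteq> q \<and> I p g \<and> I q g \<and> I p h \<and> I q h)"

text \<open>Projective Hjelmslev plane.  The image plane is taken with the same
point/line types (no loss of generality: the image of a surjection is no larger
than the domain).\<close>
definition PH_plane :: "'p set \<Rightarrow> 'l set \<Rightarrow> ('p \<Rightarrow> 'l \<Rightarrow> bool) \<Rightarrow> bool" where
  "PH_plane P L I \<longleftrightarrow>
     (\<forall>p\<in>P. \<forall>q\<in>P. \<exists>g\<in>L. I p g \<and> I q g) \<and>
     (\<forall>g\<in>L. \<forall>h\<in>L. \<exists>p\<in>P. I p g \<and> I p h) \<and>
     (\<exists>(P' :: 'p set) (L' :: 'l set) (I' :: 'p \<Rightarrow> 'l \<Rightarrow> bool)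
        (\<phi> :: 'p \<Rightarrow> 'p) (\<psi> :: 'l \<Rightarrow> 'l).
        proj_plane P' L' I' \<and> \<phi> ` P = P' \<and> \<psi> ` L = L' \<and>
        (\<forall>p\<in>P. \<forall>g\<in>L. I p g \<longrightarrow> I' (\<phi> p) (\<psi> g)) \<and>
        (\<forall>p\<in>P. \<forall>q\<in>P. \<phi> p = \<phi> q \<longleftrightarrow> pt_nb P L I p q) \<and>
        (\<forall>g\<in>L. \<forall>h\<in>L. \<psi> g = \<psi> h \<longleftrightarrow> ln_nb P L I g h))"

definition tr_PH_plane :: "nat \<Rightarrow> nat \<Rightarrow> 'p set \<Rightarrow> 'l set \<Rightarrow> ('p \<Rightarrow> 'l \<Rightarrow> bool) \<Rightarrow> bool" where
  "tr_PH_plane t r P L I \<longleftrightarrow> PH_plane P L I \<and>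
     (\<forall>g\<in>L. finite {p\<in>P. I p g} \<and> card {p\<in>P. I p g} = t * (r + 1)) \<and>
     (\<forall>g\<in>L. \<forall>p\<in>P. I p g \<longrightarrow> card {q\<in>P. I q g \<and> pt_nb P L I p q} = t)"

text \<open>The line-neighbour relation is the one induced
by the epimorphism (equal images); lines meeting in more than one point must be
neighbours, and lines without a common point are mapped to parallel lines.\<close>
definition AH_plane :: "'p set \<Rightarrow> 'l set \<Rightarrow> ('p \<Rightarrow> 'l \<Rightarrow> bool) \<Rightarrow> bool" where
  "AH_plane P L I \<longleftrightarrow>
     (\<forall>p\<in>P. \<forall>q\<in>P. \<exists>g\<in>L. I p g \<and> I q g) \<and>
     (\<exists>(P' :: 'p set) (L' :: 'l set) (I' :: 'p \<Rightarrow> 'l \<Rightarrow> bool)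
        (\<phi> :: 'p \<Rightarrow> 'p) (\<psi> :: 'l \<Rightarrow> 'l).
        affine_plane P' L' I' \<and> \<phi> ` P = P' \<and> \<psi> ` L = L' \<and>
        (\<forall>p\<in>P. \<forall>g\<in>L. I p g \<longrightarrow> I' (\<phi> p) (\<psi> g)) \<and>
        (\<forall>p\<in>P. \<forall>q\<in>P. \<phi> p = \<phi> q \<longleftrightarrow> pt_nb P L I p q) \<and>
        (\<forall>g\<in>L. \<forall>h\<in>L. ln_nb P L I g h \<longrightarrow> \<psi> g = \<psi> h) \<and>
        (\<forall>g\<in>L. \<forall>h\<in>L. \<not> (\<exists>p\<in>P. I p g \<and> I p h) \<longrightarrow> aff_parallel P' I' (\<psi> g) (\<psi> h)))"

definition tr_AH_plane :: "nat \<Rightarrow> nat \<Rightarrow> 'p set \<Rightarrow> 'l set \<Rightarrow> ('p \<Rightarrow> 'l \<Rightarrow> bool) \<Rightarrow> bool" where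
  "tr_AH_plane t r P L I \<longleftrightarrow> AH_plane P L I \<and>
     (\<forall>g\<in>L. finite {p\<in>P. I p g} \<and> card {p\<in>P. I p g} = r * t) \<and>
     (\<forall>g\<in>L. \<forall>p\<in>P. I p g \<longrightarrow> card {q\<in>P. I q g \<and> pt_nb P L I p q} = t)"

definition line_nbhd :: "'p set \<Rightarrow> 'l set \<Rightarrow> ('p \<Rightarrow> 'l \<Rightarrow> bool) \<Rightarrow> 'l set \<Rightarrow> bool" where
  "line_nbhd P L I N \<longleftrightarrow> (\<exists>g\<in>L. N = {h\<in>L. ln_nb P L I g h})"

definition inc_iso :: "'p set \<Rightarrow> 'l set \<Rightarrow> ('p \<Rightarrow> 'l \<Rightarrow> bool) \<Rightarrow>
    'q set \<Rightarrow> 'm set \<Rightarrow> ('q \<Rightarrow> 'm \<Rightarrow> bool) \<Rightarrow> bool" where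
  "inc_iso P L I P2 L2 I2 \<longleftrightarrow> (\<exists>\<alpha> \<beta>. bij_betw \<alpha> P P2 \<and> bij_betw \<beta> L L2 \<and>
     (\<forall>p\<in>P. \<forall>g\<in>L. I p g \<longleftrightarrow> I2 (\<alpha> p) (\<beta> g)))"

end

theory Submission
  imports Defs
begin

lemma card_fibres:
  assumes "finite S" "\<And>y. y \<in> f ` S \<Longrightarrow> card {x\<in>S. f x = y} = k"
  shows "card S = k * card (f ` S)"
proof -
  have S: "S = (\<Union>y\<in>f ` S. {x\<in>S. f x = y})" by auto
  have "card S = (\<Sum>y\<in>f ` S. card {x\<in>S. f x = y})"
    by (subst S, rule card_UN_disjoint) (use assms in auto)
  also have "\<dots> = (\<Sum>y\<in>f ` S. k)" using assms(2) by (rule sum.cong[OF refl])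
  finally show ?thesis by simp
qed

lemma card_fibres_le:
  assumes "finite S" "\<And>y. y \<in> f ` S \<Longrightarrow> card {x\<in>S. f x = y} \<le> 1"
  shows "card S \<le> card (f ` S)"
proof -
  have "inj_on f S"
  proof (rule inj_onI)
    fix x y assume xy: "x \<in> S" "y \<in> S" "f x = f y"
    have fin: "finite {z\<in>S. f z = f x}" using assms(1) by auto
    have "card {z\<in>S. f z = f x} \<le> 1" using assms(2) xy by auto
    moreover have "x \<in> {z\<in>S. f z = f x}" "y \<in> {z\<in>S. f z = f x}" using xy by auto
    ultimately show "x = y" using fin by (metis card_le_Suc0_iff_eq One_nat_def)
  qed
  then show ?thesis by (simp add: card_image)
qed

lemma transversal_unique:
  fixes blk :: "'i \<Rightarrow> 'p \<Rightarrow> 'p set"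
  assumes F: "finite F" "card F = t * t" and I: "finite I" "card I = t" "t \<ge> 1"
    and P: "P \<in> F"
    and blkP: "\<And>i. i \<in> I \<Longrightarrow> P \<in> blk i P \<and> blk i P \<subseteq> F \<and> card (blk i P) = t"
    and disj: "\<And>i j. i \<in> I \<Longrightarrow> j \<in> I \<Longrightarrow> i \<noteq> j \<Longrightarrow> blk i P \<inter> blk j P = {P}"
    and B: "B \<subseteq> F" "card B = t" "P \<in> B" "\<And>i. i \<in> I \<Longrightarrow> B \<inter> blk i P \<subseteq> {P}"
  shows "B = insert P (F - (\<Union>i\<in>I. blk i P))"
proof -
  define U where "U = (\<Union>i\<in>I. blk i P)"
  have UP: "U - {P} = (\<Union>i\<in>I. blk i P - {P})" by (auto simp: U_def)
  have finb: "\<And>i. i \<in> I \<Longrightarrow> finite (blk i P)" using blkP F finite_subset by blast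
  have "card (U - {P}) = (\<Sum>i\<in>I. card (blk i P - {P}))"
    unfolding UP by (rule card_UN_disjoint) (use I finb disj in auto)
  also have "\<dots> = (\<Sum>i\<in>I. t - 1)" using blkP by (intro sum.cong) auto
  finally have cU: "card (U - {P}) = t * (t - 1)" using I by simp
  have "I \<noteq> {}" using I by auto
  then have PU: "P \<in> U" using blkP by (auto simp: U_def)
  have UF: "U \<subseteq> F" using blkP by (auto simp: U_def)
  have finU: "finite U" using UF F finite_subset by blast
  have cU2: "card U = t * (t - 1) + 1" using cU PU finU by (metis card_Diff_singleton Suc_eq_plus1 card_Suc_Diff1)
  have "card (F - U) = t * t - (t * (t - 1) + 1)" using card_Diff_subset[OF finU UF] F cU2 by simp
  also have "\<dots> = t - 1" using I(3) by (cases t) (auto simp: algebra_simps)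
  finally have cFU: "card (F - U) = t - 1" .
  have cR: "card (insert P (F - U)) = t" using cFU PU F(1) I(3) by simp
  have sub: "B \<subseteq> insert P (F - U)" using B by (auto simp: U_def)
  have "finite (insert P (F - U))" using F by simp
  then have "B = insert P (F - U)" using card_subset_eq[OF _ sub] cR B(2) by simp
  then show ?thesis by (simp add: U_def)
qed


locale KAH =
  fixes t :: nat and PK :: "'a set" and LK :: "'b set" and IK :: "'a \<Rightarrow> 'b \<Rightarrow> bool"
    and A :: "'a set" and AL :: "'b set" and AI :: "'a \<Rightarrow> 'b \<Rightarrow> bool"
    and \<phi> :: "'a \<Rightarrow> 'a" and \<psi> :: "'b \<Rightarrow> 'b"
  assumes t2: "t \<ge> 2"
    and conn: "\<And>p q. p \<in> PK \<Longrightarrow> q \<in> PK \<Longrightarrow> \<exists>g\<in>LK. IK p g \<and> IK q g"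
    and aff: "affine_plane A AL AI"
    and imP: "\<phi> ` PK = A" and imL: "\<psi> ` LK = AL"
    and inc: "\<And>p g. p \<in> PK \<Longrightarrow> g \<in> LK \<Longrightarrow> IK p g \<Longrightarrow> AI (\<phi> p) (\<psi> g)"
    and nbp: "\<And>p q. p \<in> PK \<Longrightarrow> q \<in> PK \<Longrightarrow> \<phi> p = \<phi> q \<longleftrightarrow> pt_nb PK LK IK p q"
    and nbl: "\<And>g h. g \<in> LK \<Longrightarrow> h \<in> LK \<Longrightarrow> ln_nb PK LK IK g h \<Longrightarrow> \<psi> g = \<psi> h"
    and parK: "\<And>g h. g \<in> LK \<Longrightarrow> h \<in> LK \<Longrightarrow> \<not>(\<exists>p\<in>PK. IK p g \<and> IK p h) \<Longrightarrow> aff_parallel A AI (\<psi> g) (\<psi> h)"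
    and finl: "\<And>g. g \<in> LK \<Longrightarrow> finite {p\<in>PK. IK p g}"
    and cardl: "\<And>g. g \<in> LK \<Longrightarrow> card {p\<in>PK. IK p g} = t * t"
    and nbc: "\<And>g p. g \<in> LK \<Longrightarrow> p \<in> PK \<Longrightarrow> IK p g \<Longrightarrow> card {q\<in>PK. IK q g \<and> pt_nb PK LK IK p q} = t"
begin

definition "apts m = {x\<in>A. AI x m}"
definition "pts g = {p\<in>PK. IK p g}"
definition "fib x = {p\<in>PK. \<phi> p = x}"
definition "apar m h \<longleftrightarrow> aff_parallel A AI m h"

lemma join_ex: "x \<in> A \<Longrightarrow> y \<in> A \<Longrightarrow> x \<noteq> y \<Longrightarrow> \<exists>m\<in>AL. AI x m \<and> AI y m"
  using aff unfolding affine_plane_def by metis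

lemma line_eq: "x \<in> A \<Longrightarrow> y \<in> A \<Longrightarrow> x \<noteq> y \<Longrightarrow> m \<in> AL \<Longrightarrow> h \<in> AL \<Longrightarrow>
   AI x m \<Longrightarrow> AI y m \<Longrightarrow> AI x h \<Longrightarrow> AI y h \<Longrightarrow> m = h"
  using aff unfolding affine_plane_def by metis

lemma triangle: "\<exists>a\<in>A. \<exists>b\<in>A. \<exists>c\<in>A. distinct [a, b, c] \<and> \<not> collinear3 AL AI a b c"
  using aff unfolding affine_plane_def by blast

lemma par_ex1: "x \<in> A \<Longrightarrow> m \<in> AL \<Longrightarrow> \<exists>!h. h \<in> AL \<and> AI x h \<and> apar m h"
proof (cases "AI x m")
  case True
  assume x: "x \<in> A" "m \<in> AL"
  show ?thesis
  proof (rule ex1I[of _ m])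
    show "m \<in> AL \<and> AI x m \<and> apar m m" using True x by (simp add: apar_def aff_parallel_def)
    fix h assume "h \<in> AL \<and> AI x h \<and> apar m h"
    then show "h = m" using True x by (auto simp: apar_def aff_parallel_def)
  qed
next
  case False
  assume x: "x \<in> A" "m \<in> AL"
  then show ?thesis using aff False unfolding affine_plane_def apar_def by blast
qed

lemma apar_refl: "apar m m" by (simp add: apar_def aff_parallel_def)
lemma apar_sym: "apar m h \<Longrightarrow> apar h m" by (auto simp: apar_def aff_parallel_def)
lemma apar_trans:
  assumes "m \<in> AL" "h \<in> AL" "k \<in> AL" "apar m h" "apar h k" shows "apar m k"
proof (rule ccontr)
  assume "\<not> apar m k"
  then obtain x where x: "x \<in> A" "AI x m" "AI x k" "m \<noteq> k" by (auto simp: apar_def aff_parallel_def)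
  have "apar h m" "apar h k" using assms apar_sym by auto
  then show False using par_ex1[OF x(1) assms(2)] x assms by blast
qed

lemma apar_meet: "apar m h \<Longrightarrow> x \<in> A \<Longrightarrow> AI x m \<Longrightarrow> AI x h \<Longrightarrow> m = h"
  by (auto simp: apar_def aff_parallel_def)

lemma nonpar_meet1:
  assumes "m \<in> AL" "h \<in> AL" "\<not> apar m h"
  shows "\<exists>!x. x \<in> A \<and> AI x m \<and> AI x h"
proof -
  obtain x where x: "x \<in> A" "AI x m" "AI x h" using assms by (auto simp: apar_def aff_parallel_def)
  have "m \<noteq> h" using assms apar_refl by auto
  then show ?thesis using x line_eq assms by blast
qed

lemma exists_off: "m \<in> AL \<Longrightarrow> \<exists>y\<in>A. \<not> AI y m"
  using triangle unfolding collinear3_def by blast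

lemma pt_nb_sym: "pt_nb PK LK IK p q \<longleftrightarrow> pt_nb PK LK IK q p"
  unfolding pt_nb_def by blast


lemma pts_fin: "g \<in> LK \<Longrightarrow> finite (pts g)" using finl by (simp add: pts_def)
lemma pts_card: "g \<in> LK \<Longrightarrow> card (pts g) = t * t" using cardl by (simp add: pts_def)

lemma phiA: "p \<in> PK \<Longrightarrow> \<phi> p \<in> A" using imP by auto
lemma psiL: "g \<in> LK \<Longrightarrow> \<psi> g \<in> AL" using imL by auto

lemma two_lines_nb:
  assumes "g \<in> LK" "h \<in> LK" "g \<noteq> h" "p \<in> PK" "q \<in> PK" "IK p g" "IK q g" "IK p h" "IK q h"
  shows "\<phi> p = \<phi> q"
  using assms nbp unfolding pt_nb_def by blast

lemma unique_line:
  assumes "g \<in> LK" "h \<in> LK" "p \<in> PK" "q \<in> PK" "IK p g" "IK q g" "IK p h" "IK q h" "\<phi> p \<noteq> \<phi> q"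
  shows "g = h"
  using two_lines_nb assms by blast

lemma meet_le1:
  assumes "g \<in> LK" "h \<in> LK" "\<psi> g \<noteq> \<psi> h" "p \<in> PK" "q \<in> PK" "IK p g" "IK q g" "IK p h" "IK q h"
  shows "p = q"
  using assms nbl unfolding ln_nb_def by blast

lemma apts_psi: assumes g: "g \<in> LK" shows "apts (\<psi> g) = \<phi> ` pts g"
proof
  show "\<phi> ` pts g \<subseteq> apts (\<psi> g)" using inc g phiA by (auto simp: pts_def apts_def)
  show "apts (\<psi> g) \<subseteq> \<phi> ` pts g"
  proof
    fix x assume "x \<in> apts (\<psi> g)"
    then have x: "x \<in> A" "AI x (\<psi> g)" by (auto simp: apts_def)
    obtain y where y: "y \<in> A" "\<not> AI y (\<psi> g)" using exists_off psiL g by blast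
    obtain q where q: "q \<in> PK" "\<phi> q = x" using x imP by auto
    obtain r where r: "r \<in> PK" "\<phi> r = y" using y imP by auto
    obtain h where h: "h \<in> LK" "IK q h" "IK r h" using conn q r by blast
    have "AI x (\<psi> h)" "AI y (\<psi> h)" using inc h q r by auto
    then have "\<psi> h \<noteq> \<psi> g" using y by auto
    then have "\<not> apar (\<psi> g) (\<psi> h)" using apar_meet[of "\<psi> g" "\<psi> h" x] x \<open>AI x (\<psi> h)\<close> by metis
    then obtain p where p: "p \<in> PK" "IK p g" "IK p h" using parK g h(1) unfolding apar_def by blast
    have "AI (\<phi> p) (\<psi> g)" "AI (\<phi> p) (\<psi> h)" using inc p g h by auto
    then have "\<phi> p = x"
      using line_eq[of "\<phi> p" x "\<psi> g" "\<psi> h"] phiA p x \<open>AI x (\<psi> h)\<close> \<open>\<psi> h \<noteq> \<psi> g\<close> psiL g h by metis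
    then show "x \<in> \<phi> ` pts g" using p by (auto simp: pts_def)
  qed
qed

lemma fib_line_card: assumes "g \<in> LK" "p \<in> pts g"
  shows "card {q\<in>pts g. \<phi> q = \<phi> p} = t"
proof -
  have "{q\<in>pts g. \<phi> q = \<phi> p} = {q\<in>PK. IK q g \<and> pt_nb PK LK IK p q}"
    using assms by (auto simp: pts_def) (metis nbp)+
  then show ?thesis using nbc assms by (auto simp: pts_def)
qed

lemma apts_card: assumes "g \<in> LK" shows "card (apts (\<psi> g)) = t"
proof -
  have "card (pts g) = t * card (\<phi> ` pts g)"
    by (rule card_fibres) (use assms pts_fin fib_line_card in auto)
  then show ?thesis using apts_psi assms pts_card t2 by auto
qed

lemma apts_card': "m \<in> AL \<Longrightarrow> card (apts m) = t"
  using apts_card imL by auto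

lemma apts_fin: "m \<in> AL \<Longrightarrow> finite (apts m)"
  using apts_card' t2 card.infinite by fastforce

end

context KAH begin

definition "join x y = (SOME m. m\<in>AL \<and> AI x m \<and> AI y m)"
definition "parl x m = (THE h. h\<in>AL \<and> AI x h \<and> apar m h)"
definition "dir m = {h\<in>AL. apar m h}"
definition "Dirs = dir ` AL"

lemma join: "x \<in> A \<Longrightarrow> y \<in> A \<Longrightarrow> x \<noteq> y \<Longrightarrow> join x y \<in> AL \<and> AI x (join x y) \<and> AI y (join x y)"
  unfolding join_def by (rule someI_ex) (use join_ex in blast)

lemma join_uniq: "x \<in> A \<Longrightarrow> y \<in> A \<Longrightarrow> x \<noteq> y \<Longrightarrow> m \<in> AL \<Longrightarrow> AI x m \<Longrightarrow> AI y m \<Longrightarrow> join x y = m"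
  using join line_eq by metis

lemma parl: "x \<in> A \<Longrightarrow> m \<in> AL \<Longrightarrow> parl x m \<in> AL \<and> AI x (parl x m) \<and> apar m (parl x m)"
  unfolding parl_def by (rule theI') (rule par_ex1)

lemma parl_uniq: "x \<in> A \<Longrightarrow> m \<in> AL \<Longrightarrow> h \<in> AL \<Longrightarrow> AI x h \<Longrightarrow> apar m h \<Longrightarrow> parl x m = h"
  using par_ex1 parl by blast

lemma line_off: "x \<in> A \<Longrightarrow> \<exists>g\<in>AL. \<not> AI x g"
proof -
  assume x: "x \<in> A"
  obtain a b c where abc: "a\<in>A" "b\<in>A" "c\<in>A" "distinct [a,b,c]" "\<not> collinear3 AL AI a b c"
    using triangle by blast
  show ?thesis
  proof (rule ccontr)
    assume "\<not> ?thesis"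
    then have all: "\<And>g. g\<in>AL \<Longrightarrow> AI x g" by blast
    have ab: "join a b \<in> AL" "AI a (join a b)" "AI b (join a b)" using join abc by auto
    have ac: "join a c \<in> AL" "AI a (join a c)" "AI c (join a c)" using join abc by auto
    have bc: "join b c \<in> AL" "AI b (join b c)" "AI c (join b c)" using join abc by auto
    have "join a b \<noteq> join a c" using abc ab ac unfolding collinear3_def by metis
    then have "x = a" using line_eq[of x a "join a b" "join a c"] ab ac all x abc by metis
    then show False using abc bc all unfolding collinear3_def by metis
  qed
qed

lemma lines_through_card:
  assumes x: "x \<in> A" shows "card {h\<in>AL. AI x h} = t + 1"
proof -
  obtain g where g: "g \<in> AL" "\<not> AI x g" using line_off x by blast
  define S' where "S' = {h\<in>AL. AI x h \<and> \<not> apar g h}"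
  have split: "{h\<in>AL. AI x h} = insert (parl x g) S'"
    using parl[OF x g(1)] parl_uniq[OF x g(1)] by (auto simp: S'_def)
  have notin: "parl x g \<notin> S'" using parl[OF x g(1)] by (auto simp: S'_def)
  have "bij_betw (join x) (apts g) S'"
  proof (rule bij_betw_imageI)
    show "inj_on (join x) (apts g)"
    proof (rule inj_onI)
      fix y z assume yz: "y \<in> apts g" "z \<in> apts g" "join x y = join x z"
      then have ne: "y \<noteq> x" "z \<noteq> x" using g by (auto simp: apts_def)
      show "y = z"
      proof (rule ccontr)
        assume "y \<noteq> z"
        then have "join x y = g" using line_eq[of y z "join x y" g] join[of x y] join[of x z] yz ne x g
          by (auto simp: apts_def)
        then show False using join[of x y] yz ne x g by (auto simp: apts_def)
      qed
    qed
    show "join x ` apts g = S'"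
    proof
      show "join x ` apts g \<subseteq> S'"
      proof
        fix h assume "h \<in> join x ` apts g"
        then obtain y where y: "y \<in> apts g" "h = join x y" by auto
        then have ne: "y \<noteq> x" using g by (auto simp: apts_def)
        have j: "h \<in> AL" "AI x h" "AI y h" using join[of x y] y ne x by (auto simp: apts_def)
        have "\<not> apar g h" using apar_meet[of g h y] j y g by (auto simp: apts_def)
        then show "h \<in> S'" using j by (auto simp: S'_def)
      qed
      show "S' \<subseteq> join x ` apts g"
      proof
        fix h assume h: "h \<in> S'"
        then obtain y where y: "y \<in> A" "AI y g" "AI y h" using nonpar_meet1[of g h] g by (auto simp: S'_def)
        then have "y \<noteq> x" using g by auto
        then have "join x y = h" using join_uniq[of x y h] h y x by (auto simp: S'_def)
        then show "h \<in> join x ` apts g" using y by (auto simp: apts_def)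
      qed
    qed
  qed
  then have "card S' = t" using apts_card' g bij_betw_same_card by metis
  moreover have "finite S'" using \<open>card S' = t\<close> t2 card.infinite by fastforce
  ultimately show ?thesis using split notin by simp
qed

lemma nonpar_exists: assumes m: "m \<in> AL" shows "\<exists>g\<in>AL. \<not> apar m g"
proof -
  obtain y where y: "y \<in> A" "\<not> AI y m" using exists_off m by blast
  have "card (apts m) = t" using apts_card' m by simp
  then obtain x where x: "x \<in> apts m" using t2 by (metis card.empty empty_iff le_zero_eq not_numeral_le_zero all_not_in_conv)
  then have ne: "x \<noteq> y" using y by (auto simp: apts_def)
  have "\<not> apar m (join x y)" using join[of x y] x y ne apar_meet[of m "join x y" x] by (auto simp: apts_def)
  then show ?thesis using join[of x y] x y ne by (auto simp: apts_def)
qed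

lemma dir_card: assumes m: "m \<in> AL" shows "card (dir m) = t"
proof -
  obtain g where g: "g \<in> AL" "\<not> apar m g" using nonpar_exists m by blast
  have "bij_betw (\<lambda>y. parl y m) (apts g) (dir m)"
  proof (rule bij_betw_imageI)
    show "inj_on (\<lambda>y. parl y m) (apts g)"
    proof (rule inj_onI)
      fix y z assume yz: "y \<in> apts g" "z \<in> apts g" "parl y m = parl z m"
      show "y = z"
      proof (rule ccontr)
        assume ne: "y \<noteq> z"
        have "parl y m = g" using line_eq[of y z "parl y m" g] parl[of y m] parl[of z m] yz ne m g
          by (auto simp: apts_def)
        then show False using parl[of y m] yz m g by (auto simp: apts_def)
      qed
    qed
    show "(\<lambda>y. parl y m) ` apts g = dir m"
    proof
      show "(\<lambda>y. parl y m) ` apts g \<subseteq> dir m" using parl m by (auto simp: apts_def dir_def)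
      show "dir m \<subseteq> (\<lambda>y. parl y m) ` apts g"
      proof
        fix h assume h: "h \<in> dir m"
        then have "\<not> apar h g" using apar_trans[of m h g] g m by (auto simp: dir_def)
        then obtain y where y: "y \<in> A" "AI y g" "AI y h" using nonpar_meet1[of h g] g h by (auto simp: dir_def)
        then have "parl y m = h" using parl_uniq[of y m h] h m by (auto simp: dir_def)
        then show "h \<in> (\<lambda>y. parl y m) ` apts g" using y by (auto simp: apts_def)
      qed
    qed
  qed
  then show ?thesis using apts_card' g bij_betw_same_card by metis
qed

lemma dir_fin: "m \<in> AL \<Longrightarrow> finite (dir m)"
  using dir_card t2 card.infinite by fastforce

lemma dir_eq: "m \<in> AL \<Longrightarrow> h \<in> AL \<Longrightarrow> dir m = dir h \<longleftrightarrow> apar m h"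
  unfolding dir_def using apar_trans apar_sym apar_refl by blast

lemma in_dir: "m \<in> AL \<Longrightarrow> m \<in> dir m" by (simp add: dir_def apar_refl)

lemma dir_sub: "d \<in> Dirs \<Longrightarrow> d \<subseteq> AL" by (auto simp: Dirs_def dir_def)

lemma dir_of_mem: "d \<in> Dirs \<Longrightarrow> h \<in> d \<Longrightarrow> dir h = d"
  unfolding Dirs_def dir_def using apar_trans apar_sym by blast

lemma Dirs_card: "card Dirs = t + 1"
proof -
  obtain x where x: "x \<in> A" using triangle by blast
  have "bij_betw dir {h\<in>AL. AI x h} Dirs"
  proof (rule bij_betw_imageI)
    show "inj_on dir {h\<in>AL. AI x h}"
      by (rule inj_onI) (use dir_eq apar_meet x in blast)
    show "dir ` {h\<in>AL. AI x h} = Dirs"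
    proof
      show "dir ` {h\<in>AL. AI x h} \<subseteq> Dirs" by (auto simp: Dirs_def)
      show "Dirs \<subseteq> dir ` {h\<in>AL. AI x h}"
      proof
        fix d assume "d \<in> Dirs"
        then obtain m where m: "m \<in> AL" "d = dir m" by (auto simp: Dirs_def)
        then have "dir (parl x m) = d" using parl[OF x m(1)] dir_eq apar_sym by auto
        then show "d \<in> dir ` {h\<in>AL. AI x h}" using parl[OF x m(1)] by blast
      qed
    qed
  qed
  then show ?thesis using lines_through_card x bij_betw_same_card by metis
qed

lemma Dirs_fin: "finite Dirs" using Dirs_card card.infinite by fastforce

lemma AL_fin: "finite AL"
proof -
  have "AL = \<Union>Dirs" by (auto simp: Dirs_def dir_def apar_refl)
  then show ?thesis using Dirs_fin dir_fin by (metis Dirs_def finite_Union imageE)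
qed

lemma A_fin: "finite A"
proof -
  obtain x where x: "x \<in> A" using triangle by blast
  have "A \<subseteq> insert x (\<Union>h\<in>AL. apts h)" using join x by (auto simp: apts_def) 
  then show ?thesis using AL_fin apts_fin finite_subset by blast
qed

end

context KAH begin

definition "kjoin p q = (SOME g. g\<in>LK \<and> IK p g \<and> IK q g)"

lemma kjoin: "p \<in> PK \<Longrightarrow> q \<in> PK \<Longrightarrow> kjoin p q \<in> LK \<and> IK p (kjoin p q) \<and> IK q (kjoin p q)"
  unfolding kjoin_def by (rule someI_ex) (use conn in blast)

lemma kjoin_uniq: "p \<in> PK \<Longrightarrow> q \<in> PK \<Longrightarrow> \<phi> p \<noteq> \<phi> q \<Longrightarrow> g \<in> LK \<Longrightarrow> IK p g \<Longrightarrow> IK q g \<Longrightarrow> kjoin p q = g"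
  using kjoin unique_line by metis

lemma psi_eq_join: "g \<in> LK \<Longrightarrow> p \<in> PK \<Longrightarrow> q \<in> PK \<Longrightarrow> IK p g \<Longrightarrow> IK q g \<Longrightarrow> \<phi> p \<noteq> \<phi> q \<Longrightarrow> \<psi> g = join (\<phi> p) (\<phi> q)"
  using join_uniq[of "\<phi> p" "\<phi> q" "\<psi> g"] inc phiA psiL by metis

lemma fib_nonempty: "x \<in> A \<Longrightarrow> \<exists>R. R \<in> fib x" using imP by (auto simp: fib_def)

lemma block_card: "g \<in> LK \<Longrightarrow> P \<in> pts g \<Longrightarrow> card (pts g \<inter> fib (\<phi> P)) = t"
proof -
  assume a: "g \<in> LK" "P \<in> pts g"
  have "pts g \<inter> fib (\<phi> P) = {q\<in>pts g. \<phi> q = \<phi> P}" by (auto simp: pts_def fib_def)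
  then show ?thesis using fib_line_card[OF a] by simp
qed

lemma block_fin: "g \<in> LK \<Longrightarrow> finite (pts g \<inter> fib x)" using pts_fin by auto

lemma line_meets_fib: "g \<in> LK \<Longrightarrow> AI x (\<psi> g) \<Longrightarrow> x \<in> A \<Longrightarrow> \<exists>P. P \<in> pts g \<inter> fib x"
proof -
  assume a: "g \<in> LK" "AI x (\<psi> g)" "x \<in> A"
  then have "x \<in> \<phi> ` pts g" using apts_psi[of g] by (auto simp: apts_def)
  then show ?thesis by (auto simp: pts_def fib_def)
qed

lemma meet_cross:
  assumes g: "g \<in> LK" and h: "h \<in> LK" and ne: "\<psi> g \<noteq> \<psi> h" and x: "x \<in> A" "AI x (\<psi> g)" "AI x (\<psi> h)"
  shows "\<exists>p. p \<in> PK \<and> IK p g \<and> IK p h \<and> \<phi> p = x"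
proof -
  have "\<not> apar (\<psi> g) (\<psi> h)" using apar_meet[of "\<psi> g" "\<psi> h" x] x ne by blast
  then obtain p where p: "p \<in> PK" "IK p g" "IK p h" using parK g h unfolding apar_def by blast
  have "AI (\<phi> p) (\<psi> g)" "AI (\<phi> p) (\<psi> h)" using inc p g h by auto
  then have "\<phi> p = x" using line_eq[of "\<phi> p" x "\<psi> g" "\<psi> h"] phiA p x ne psiL g h by metis
  then show ?thesis using p by blast
qed

lemma join_sym: "x \<in> A \<Longrightarrow> y \<in> A \<Longrightarrow> x \<noteq> y \<Longrightarrow> join x y = join y x"
  using join join_uniq by metis

lemma kjoin_psi_x: "R \<in> PK \<Longrightarrow> Q \<in> PK \<Longrightarrow> \<phi> Q = x \<Longrightarrow> \<phi> R \<noteq> x \<Longrightarrow> \<psi> (kjoin R Q) = join x (\<phi> R)"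
  using psi_eq_join[of "kjoin R Q" Q R] kjoin[of R Q] by (metis join_sym phiA)

lemma kjoin_psi: "R \<in> PK \<Longrightarrow> Q \<in> PK \<Longrightarrow> \<phi> R \<noteq> \<phi> Q \<Longrightarrow> \<psi> (kjoin R Q) = join (\<phi> R) (\<phi> Q)"
  using psi_eq_join kjoin by metis

lemma cross_cover:
  assumes x: "x \<in> A" and R: "R \<in> PK" "\<phi> R \<noteq> x" and R': "R' \<in> PK" "\<phi> R' \<noteq> x"
    and ne: "join x (\<phi> R) \<noteq> join x (\<phi> R')"
    and Q: "Q \<in> fib x" and P: "P \<in> fib x"
  shows "\<exists>p\<in>pts (kjoin R P) \<inter> fib x. kjoin R' Q = kjoin R' p"
proof -
  have QP: "Q \<in> PK" "\<phi> Q = x" "P \<in> PK" "\<phi> P = x" using Q P by (auto simp: fib_def)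
  define g where "g = kjoin R P"
  define h where "h = kjoin R' Q"
  have g: "g \<in> LK" "IK R g" "IK P g" using kjoin R QP by (auto simp: g_def)
  have h: "h \<in> LK" "IK R' h" "IK Q h" using kjoin R' QP by (auto simp: h_def)
  have pg: "\<psi> g = join x (\<phi> R)" using kjoin_psi[of R P] R QP join_uniq phiA
    by (metis g_def join)
  have ph: "\<psi> h = join x (\<phi> R')" using kjoin_psi[of R' Q] R' QP join_uniq phiA
    by (metis h_def join)
  have "AI x (\<psi> g)" "AI x (\<psi> h)" using inc[of P g] inc[of Q h] g h QP by auto
  then obtain p where p: "p \<in> PK" "IK p g" "IK p h" "\<phi> p = x" using meet_cross[OF g(1) h(1) _ x] pg ph ne by metis
  have "kjoin R' p = h" using kjoin_uniq[of R' p h] R' p h by auto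
  moreover have "p \<in> pts (kjoin R P) \<inter> fib x" using p by (auto simp: g_def pts_def fib_def)
  ultimately show ?thesis unfolding h_def by metis
qed

lemma two_dirs_at: assumes x: "x \<in> A"
  shows "\<exists>R R'. R \<in> PK \<and> R' \<in> PK \<and> \<phi> R \<noteq> x \<and> \<phi> R' \<noteq> x \<and> join x (\<phi> R) \<noteq> join x (\<phi> R')"
proof -
  have "card {h\<in>AL. AI x h} = t + 1" using lines_through_card x by simp
  then have "2 \<le> card {h\<in>AL. AI x h}" using t2 by simp
  then obtain m1 m2 where m: "m1 \<in> AL" "AI x m1" "m2 \<in> AL" "AI x m2" "m1 \<noteq> m2"
    by (auto simp: numeral_2_eq_2 le_Suc_eq card_le_Suc_iff)
  have "\<And>m. m \<in> AL \<Longrightarrow> AI x m \<Longrightarrow> \<exists>y\<in>A. AI y m \<and> y \<noteq> x"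
  proof -
    fix m assume m: "m \<in> AL" "AI x m"
    have "card (apts m) = t" using apts_card' m by simp
    then have "\<not> apts m \<subseteq> {x}" using t2 by (metis card.empty card_insert_disjoint empty_iff finite.emptyI insert_absorb nat.simps(3) not_numeral_le_zero numeral_2_eq_2 subset_singletonD Suc_le_mono one_le_numeral card_1_singleton_iff le_zero_eq)
    then show "\<exists>y\<in>A. AI y m \<and> y \<noteq> x" by (auto simp: apts_def)
  qed
  then obtain y1 y2 where y: "y1 \<in> A" "AI y1 m1" "y1 \<noteq> x" "y2 \<in> A" "AI y2 m2" "y2 \<noteq> x" using m by metis
  obtain R R' where RR: "R \<in> PK" "\<phi> R = y1" "R' \<in> PK" "\<phi> R' = y2" using y imP by (metis imageE)
  have "join x y1 = m1" "join x y2 = m2" using join_uniq x y m by auto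
  then show ?thesis using RR y m by metis
qed

lemma fib_fin: assumes x: "x \<in> A" shows "finite (fib x)"
proof -
  obtain R R' where RR: "R \<in> PK" "R' \<in> PK" "\<phi> R \<noteq> x" "\<phi> R' \<noteq> x" "join x (\<phi> R) \<noteq> join x (\<phi> R')"
    using two_dirs_at x by blast
  obtain P where P: "P \<in> fib x" using fib_nonempty x by blast
  have "fib x \<subseteq> (\<Union>p\<in>pts (kjoin R P) \<inter> fib x. pts (kjoin R' p))"
  proof
    fix Q assume Q: "Q \<in> fib x"
    obtain p where "p\<in>pts (kjoin R P) \<inter> fib x" "kjoin R' Q = kjoin R' p"
      using cross_cover[OF x RR(1,3) RR(2,4) RR(5) Q P] by blast
    moreover have "Q \<in> pts (kjoin R' Q)" using kjoin RR Q by (auto simp: pts_def fib_def)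
    ultimately show "Q \<in> (\<Union>p\<in>pts (kjoin R P) \<inter> fib x. pts (kjoin R' p))" by auto
  qed
  moreover have "finite (\<Union>p\<in>pts (kjoin R P) \<inter> fib x. pts (kjoin R' p))"
    using pts_fin kjoin RR P by (auto simp: fib_def pts_def intro!: finite_UN_I block_fin[simplified pts_def fib_def])
  ultimately show ?thesis using finite_subset by blast
qed

lemma fib_card_R:
  assumes x: "x \<in> A" and R: "R \<in> PK" "\<phi> R \<noteq> x"
  shows "card (fib x) = t * card (kjoin R ` fib x)"
proof (rule card_fibres)
  show "finite (fib x)" using fib_fin x by simp
  fix g assume "g \<in> kjoin R ` fib x"
  then obtain Q0 where Q0: "Q0 \<in> fib x" "g = kjoin R Q0" by auto
  have g: "g \<in> LK" "IK R g" "IK Q0 g" using kjoin R Q0 by (auto simp: fib_def)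
  have "{Q \<in> fib x. kjoin R Q = g} = pts g \<inter> fib x"
  proof
    show "{Q \<in> fib x. kjoin R Q = g} \<subseteq> pts g \<inter> fib x" using kjoin R by (auto simp: pts_def fib_def)
    show "pts g \<inter> fib x \<subseteq> {Q \<in> fib x. kjoin R Q = g}"
      using kjoin_uniq[of R _ g] R g by (auto simp: pts_def fib_def)
  qed
  moreover have "Q0 \<in> pts g" "\<phi> Q0 = x" using g Q0 by (auto simp: pts_def fib_def)
  ultimately show "card {Q \<in> fib x. kjoin R Q = g} = t" using block_card[of g Q0] g by simp
qed

lemma count_R':
  assumes x: "x \<in> A" and R: "R \<in> PK" "\<phi> R \<noteq> x" and R': "R' \<in> PK" "\<phi> R' \<noteq> x"
    and ne: "join x (\<phi> R) \<noteq> join x (\<phi> R')" and P: "P \<in> fib x"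
  shows "card (kjoin R' ` fib x) = t"
proof -
  define g where "g = kjoin R P"
  have g: "g \<in> LK" "IK R g" "IK P g" using kjoin R P by (auto simp: g_def fib_def)
  have "bij_betw (kjoin R') (pts g \<inter> fib x) (kjoin R' ` fib x)"
  proof (rule bij_betw_imageI)
    show "inj_on (kjoin R') (pts g \<inter> fib x)"
    proof (rule inj_onI)
      fix p1 p2 assume p: "p1 \<in> pts g \<inter> fib x" "p2 \<in> pts g \<inter> fib x" "kjoin R' p1 = kjoin R' p2"
      have pp: "p1 \<in> PK" "p2 \<in> PK" "\<phi> p1 = x" "\<phi> p2 = x" "IK p1 g" "IK p2 g" using p by (auto simp: pts_def fib_def)
      define h where "h = kjoin R' p1"
      have h: "h \<in> LK" "IK R' h" "IK p1 h" "IK p2 h" using kjoin[of R' p1] kjoin[of R' p2] R' pp p(3) by (auto simp: h_def)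
      have "\<psi> g = join x (\<phi> R)" using kjoin_psi_x[of R P x] R P by (simp add: g_def fib_def)
      moreover have "\<psi> h = join x (\<phi> R')" using kjoin_psi_x[of R' p1 x] R' pp by (simp add: h_def)
      ultimately show "p1 = p2" using meet_le1[of g h p1 p2] g h pp ne by auto
    qed
    show "kjoin R' ` (pts g \<inter> fib x) = kjoin R' ` fib x"
    proof
      show "kjoin R' ` (pts g \<inter> fib x) \<subseteq> kjoin R' ` fib x" by auto
      show "kjoin R' ` fib x \<subseteq> kjoin R' ` (pts g \<inter> fib x)"
        using cross_cover[OF x R R' ne _ P] by (auto simp: g_def)
    qed
  qed
  then have "card (kjoin R' ` fib x) = card (pts g \<inter> fib x)" by (simp add: bij_betw_same_card)
  also have "\<dots> = t" using block_card[of g P] g P by (auto simp: pts_def fib_def)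
  finally show ?thesis .
qed

lemma fib_card: assumes x: "x \<in> A" shows "card (fib x) = t * t"
proof -
  obtain R R' where RR: "R \<in> PK" "R' \<in> PK" "\<phi> R \<noteq> x" "\<phi> R' \<noteq> x" "join x (\<phi> R) \<noteq> join x (\<phi> R')"
    using two_dirs_at x by blast
  obtain P where P: "P \<in> fib x" using fib_nonempty x by blast
  show ?thesis using fib_card_R[OF x RR(2,4)] count_R'[OF x RR(1,3) RR(2,4) RR(5) P] by simp
qed

end

context KAH begin

lemma other_pt: "m \<in> AL \<Longrightarrow> x \<in> A \<Longrightarrow> \<exists>y\<in>A. AI y m \<and> y \<noteq> x"
proof -
  fix m assume m: "m \<in> AL" "x \<in> A"
  have "card (apts m) = t" using apts_card' m by simp
  then have "\<not> apts m \<subseteq> {x}" using t2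
    by (metis card.empty card_insert_disjoint empty_iff finite.emptyI insert_absorb nat.simps(3) not_numeral_le_zero numeral_2_eq_2 subset_singletonD Suc_le_mono one_le_numeral card_1_singleton_iff le_zero_eq)
  then show "\<exists>y\<in>A. AI y m \<and> y \<noteq> x" by (auto simp: apts_def)
qed

definition "Rsel x m = (SOME R. R \<in> PK \<and> \<phi> R \<noteq> x \<and> AI (\<phi> R) m)"

lemma Rsel: assumes "m \<in> AL" "x \<in> A" shows "Rsel x m \<in> PK \<and> \<phi> (Rsel x m) \<noteq> x \<and> AI (\<phi> (Rsel x m)) m"
proof -
  obtain y where y: "y \<in> A" "AI y m" "y \<noteq> x" using other_pt assms by blast
  then obtain R where "R \<in> PK" "\<phi> R = y" using imP by auto
  then have "\<exists>R. R \<in> PK \<and> \<phi> R \<noteq> x \<and> AI (\<phi> R) m" using y by auto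
  then show ?thesis unfolding Rsel_def by (rule someI_ex)
qed

lemma kjoin_Rsel_psi:
  assumes m: "m \<in> AL" "AI x m" and x: "x \<in> A" and Q: "Q \<in> fib x"
  shows "\<psi> (kjoin (Rsel x m) Q) = m"
proof -
  have "\<psi> (kjoin (Rsel x m) Q) = join x (\<phi> (Rsel x m))"
    using kjoin_psi_x Rsel[OF m(1) x] Q by (auto simp: fib_def)
  also have "\<dots> = m" using join_uniq Rsel[OF m(1) x] m x phiA by metis
  finally show ?thesis .
qed

lemma block_eq_aux:
  assumes g: "g \<in> LK" and P: "P \<in> pts g"
  shows "pts g \<inter> fib (\<phi> P) = insert P (fib (\<phi> P) - (\<Union>m'\<in>{m'\<in>AL. AI (\<phi> P) m' \<and> m' \<noteq> \<psi> g}. pts (kjoin (Rsel (\<phi> P) m') P) \<inter> fib (\<phi> P)))"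
proof -
  define x where "x = \<phi> P"
  define m where "m = \<psi> g"
  define I where "I = {m'\<in>AL. AI x m' \<and> m' \<noteq> m}"
  define blk where "blk m' Q = pts (kjoin (Rsel x m') Q) \<inter> fib x" for m' Q
  have PK: "P \<in> PK" "IK P g" using P by (auto simp: pts_def)
  have x: "x \<in> A" using phiA PK by (simp add: x_def)
  have Pf: "P \<in> fib x" using PK by (simp add: fib_def x_def)
  have mL: "m \<in> AL" "AI x m" using psiL g inc PK by (auto simp: m_def x_def)
  have cI: "card I = t"
  proof -
    have "{h\<in>AL. AI x h} = insert m I" using mL by (auto simp: I_def)
    moreover have "m \<notin> I" by (simp add: I_def)
    moreover have "finite I" using AL_fin by (simp add: I_def)
    ultimately show ?thesis using lines_through_card[OF x] by simp
  qed
  have blkP: "\<And>i. i \<in> I \<Longrightarrow> P \<in> blk i P \<and> blk i P \<subseteq> fib x \<and> card (blk i P) = t"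
  proof -
    fix i assume i: "i \<in> I"
    have R: "Rsel x i \<in> PK" using Rsel x i by (auto simp: I_def)
    have k: "kjoin (Rsel x i) P \<in> LK" "IK P (kjoin (Rsel x i) P)" using kjoin R PK by auto
    then show "P \<in> blk i P \<and> blk i P \<subseteq> fib x \<and> card (blk i P) = t"
      using block_card[of "kjoin (Rsel x i) P" P] PK Pf by (auto simp: blk_def pts_def x_def)
  qed
  have disj: "\<And>i j. i \<in> I \<Longrightarrow> j \<in> I \<Longrightarrow> i \<noteq> j \<Longrightarrow> blk i P \<inter> blk j P = {P}"
  proof -
    fix i j assume ij: "i \<in> I" "j \<in> I" "i \<noteq> j"
    have R: "Rsel x i \<in> PK" "Rsel x j \<in> PK" using Rsel x ij by (auto simp: I_def)
    have k: "kjoin (Rsel x i) P \<in> LK" "kjoin (Rsel x j) P \<in> LK" using kjoin R PK by auto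
    have ps: "\<psi> (kjoin (Rsel x i) P) = i" "\<psi> (kjoin (Rsel x j) P) = j"
      using kjoin_Rsel_psi x Pf ij by (auto simp: I_def)
    show "blk i P \<inter> blk j P = {P}"
      using meet_le1[OF k, of P] ps ij blkP[OF ij(1)] blkP[OF ij(2)] by (auto simp: blk_def pts_def)
  qed
  have B: "pts g \<inter> fib x \<subseteq> fib x" "card (pts g \<inter> fib x) = t" "P \<in> pts g \<inter> fib x"
    "\<And>i. i \<in> I \<Longrightarrow> (pts g \<inter> fib x) \<inter> blk i P \<subseteq> {P}"
  proof -
    show "pts g \<inter> fib x \<subseteq> fib x" by auto
    show "card (pts g \<inter> fib x) = t" using block_card g P by (simp add: x_def)
    show "P \<in> pts g \<inter> fib x" using P Pf by auto
    fix i assume i: "i \<in> I"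
    have R: "Rsel x i \<in> PK" using Rsel x i by (auto simp: I_def)
    have k: "kjoin (Rsel x i) P \<in> LK" using kjoin R PK by auto
    have ps: "\<psi> (kjoin (Rsel x i) P) = i" using kjoin_Rsel_psi x Pf i by (auto simp: I_def)
    show "(pts g \<inter> fib x) \<inter> blk i P \<subseteq> {P}"
      using meet_le1[OF g k, of P] ps i blkP[OF i] PK by (auto simp: blk_def pts_def I_def m_def)
  qed
  have "pts g \<inter> fib x = insert P (fib x - (\<Union>i\<in>I. blk i P))"
  proof (rule transversal_unique[where blk=blk and I=I and F="fib x" and t=t])
    show "finite I" using AL_fin by (simp add: I_def)
  qed (use fib_fin[OF x] fib_card[OF x] cI Pf blkP disj B t2 in auto)
  then show ?thesis by (simp add: x_def blk_def I_def m_def)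
qed

lemma block_eq:
  assumes g: "g \<in> LK" "h \<in> LK" "\<psi> g = \<psi> h" "P \<in> pts g" "P \<in> pts h"
  shows "pts g \<inter> fib (\<phi> P) = pts h \<inter> fib (\<phi> P)"
  using block_eq_aux[of g P] block_eq_aux[of h P] assms by simp

end

context KAH begin

definition "LP P m = {g\<in>LK. IK P g \<and> \<psi> g = m}"
definition "grp g = {h\<in>LK. \<psi> h = \<psi> g \<and> (h = g \<or> pts h \<inter> pts g = {})}"

lemma LP_eq:
  assumes P: "P \<in> PK" and m: "m \<in> AL" "AI (\<phi> P) m" and z: "z \<in> A" "AI z m" "z \<noteq> \<phi> P"
  shows "LP P m = kjoin P ` fib z"
proof
  show "LP P m \<subseteq> kjoin P ` fib z"
  proof
    fix h assume h: "h \<in> LP P m"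
    then obtain Q where Q: "Q \<in> pts h \<inter> fib z" using line_meets_fib[of h z] z by (auto simp: LP_def)
    have "kjoin P Q = h" using kjoin_uniq[of P Q h] P Q h z by (auto simp: LP_def pts_def fib_def)
    then show "h \<in> kjoin P ` fib z" using Q by auto
  qed
  show "kjoin P ` fib z \<subseteq> LP P m"
  proof
    fix h assume "h \<in> kjoin P ` fib z"
    then obtain Q where Q: "Q \<in> fib z" "h = kjoin P Q" by auto
    have "\<psi> h = join z (\<phi> P)" using kjoin_psi_x[of P Q z] P Q z by (auto simp: fib_def)
    also have "\<dots> = m" using join_uniq[of z "\<phi> P" m] z m P phiA by auto
    finally show "h \<in> LP P m" using kjoin[of P Q] P Q by (auto simp: LP_def fib_def)
  qed
qed

lemma LP_card:
  assumes P: "P \<in> PK" and m: "m \<in> AL" "AI (\<phi> P) m"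
  shows "card (LP P m) = t"
proof -
  obtain z where z: "z \<in> A" "AI z m" "z \<noteq> \<phi> P" using other_pt m phiA P by blast
  have "card (fib z) = t * card (kjoin P ` fib z)" using fib_card_R[of z P] z P by auto
  then have "t * t = t * card (LP P m)" using LP_eq[OF P m z] fib_card z by simp
  then show ?thesis using t2 by simp
qed

lemma LP_fin: "P \<in> PK \<Longrightarrow> m \<in> AL \<Longrightarrow> AI (\<phi> P) m \<Longrightarrow> finite (LP P m)"
  using LP_card t2 card.infinite by fastforce

lemma disjoint_unique:
  assumes P: "P \<in> PK" and g: "g \<in> LK" and m: "\<psi> g = m" "AI (\<phi> P) m" and Pg: "\<not> IK P g"
  shows "\<exists>!h. h \<in> LP P m \<and> pts h \<inter> pts g = {}"
proof -
  define x where "x = \<phi> P"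
  have mL: "m \<in> AL" using psiL g m by auto
  have x: "x \<in> A" using phiA P by (simp add: x_def)
  define M where "M = {h\<in>LP P m. pts h \<inter> pts g \<noteq> {}}"
  define f where "f h = \<phi> (SOME Q. Q \<in> pts h \<inter> pts g)" for h
  have fQ: "\<And>h. h \<in> M \<Longrightarrow> (SOME Q. Q \<in> pts h \<inter> pts g) \<in> pts h \<inter> pts g"
    unfolding M_def by (rule someI_ex) auto
  have key: "\<And>h Q. h \<in> LP P m \<Longrightarrow> Q \<in> pts h \<inter> pts g \<Longrightarrow> \<phi> Q \<noteq> x \<and> pts h \<inter> fib (\<phi> Q) = pts g \<inter> fib (\<phi> Q)"
  proof -
    fix h Q assume h: "h \<in> LP P m" and Q: "Q \<in> pts h \<inter> pts g"
    have hL: "h \<in> LK" "IK P h" "\<psi> h = m" using h by (auto simp: LP_def)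
    have bl: "pts h \<inter> fib (\<phi> Q) = pts g \<inter> fib (\<phi> Q)" using block_eq[of h g Q] hL g m Q by auto
    moreover have "\<phi> Q \<noteq> x"
    proof
      assume "\<phi> Q = x"
      then have "P \<in> pts h \<inter> fib (\<phi> Q)" using hL P by (auto simp: pts_def fib_def x_def)
      then show False using bl Pg by (auto simp: pts_def)
    qed
    ultimately show "\<phi> Q \<noteq> x \<and> pts h \<inter> fib (\<phi> Q) = pts g \<inter> fib (\<phi> Q)" by simp
  qed
  have "bij_betw f M (apts m - {x})"
  proof (rule bij_betw_imageI)
    show "inj_on f M"
    proof (rule inj_onI)
      fix h1 h2 assume h: "h1 \<in> M" "h2 \<in> M" "f h1 = f h2"
      define Q1 where "Q1 = (SOME Q. Q \<in> pts h1 \<inter> pts g)"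
      define Q2 where "Q2 = (SOME Q. Q \<in> pts h2 \<inter> pts g)"
      have Q: "Q1 \<in> pts h1 \<inter> pts g" "Q2 \<in> pts h2 \<inter> pts g" using fQ h by (auto simp: Q1_def Q2_def)
      have hM: "h1 \<in> LP P m" "h2 \<in> LP P m" using h by (auto simp: M_def)
      have eq: "\<phi> Q1 = \<phi> Q2" using h(3) by (simp add: f_def Q1_def Q2_def)
      have k1: "\<phi> Q1 \<noteq> x \<and> pts h1 \<inter> fib (\<phi> Q1) = pts g \<inter> fib (\<phi> Q1)" using key hM Q by blast
      have k2: "pts h2 \<inter> fib (\<phi> Q1) = pts g \<inter> fib (\<phi> Q1)" using key[OF hM(2) Q(2)] eq by simp
      have "Q1 \<in> pts h1 \<inter> fib (\<phi> Q1)" using Q by (simp add: pts_def fib_def)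
      then have "Q1 \<in> pts h2" using k1 k2 by blast
      moreover have "h1 \<in> LK" "h2 \<in> LK" "IK P h1" "IK P h2" using hM by (auto simp: LP_def)
      moreover have "Q1 \<in> PK" "IK Q1 h1" using Q by (auto simp: pts_def)
      ultimately show "h1 = h2" using unique_line[of h1 h2 P Q1] k1 P by (auto simp: pts_def x_def)
    qed
    show "f ` M = apts m - {x}"
    proof
      show "f ` M \<subseteq> apts m - {x}"
      proof
        fix z assume "z \<in> f ` M"
        then obtain h where h: "h \<in> M" "z = f h" by auto
        define Q where "Q = (SOME Q. Q \<in> pts h \<inter> pts g)"
        have Q: "Q \<in> pts h \<inter> pts g" using fQ h by (simp add: Q_def)
        have hLP: "h \<in> LP P m" using h(1) by (simp add: M_def)
        have "\<phi> Q \<noteq> x" using key[OF hLP Q] by simp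
        moreover have "AI (\<phi> Q) m" using inc[of Q g] g m Q by (simp add: pts_def)
        moreover have "z = \<phi> Q" using h(2) by (simp add: f_def Q_def)
        moreover have "\<phi> Q \<in> A" using phiA Q by (simp add: pts_def)
        ultimately show "z \<in> apts m - {x}" by (simp add: apts_def)
      qed
      show "apts m - {x} \<subseteq> f ` M"
      proof
        fix z assume z: "z \<in> apts m - {x}"
        then obtain Q where Q: "Q \<in> pts g \<inter> fib z" using line_meets_fib[of g z] g m by (auto simp: apts_def)
        define h where "h = kjoin P Q"
        have QK: "Q \<in> PK" "\<phi> Q = z" "IK Q g" using Q by (auto simp: pts_def fib_def)
        have hL: "h \<in> LK" "IK P h" "IK Q h" using kjoin[of P Q] P QK by (auto simp: h_def)
        have "\<psi> h = join z x" using kjoin_psi_x[of P Q z] P QK z by (auto simp: h_def x_def)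
        also have "\<dots> = m" using join_uniq[of z x m] z m x mL by (auto simp: apts_def x_def)
        finally have hm: "h \<in> LP P m" using hL by (auto simp: LP_def)
        have hM: "h \<in> M" using hm QK hL by (auto simp: M_def pts_def)
        define Q' where "Q' = (SOME Q. Q \<in> pts h \<inter> pts g)"
        have Q': "Q' \<in> pts h \<inter> pts g" using fQ hM by (simp add: Q'_def)
        have "\<phi> Q' = \<phi> Q"
        proof (rule ccontr)
          assume "\<phi> Q' \<noteq> \<phi> Q"
          then have "h = g" using unique_line[of h g Q Q'] hL g QK Q' by (auto simp: pts_def)
          then show False using hL Pg by simp
        qed
        then have "f h = z" using QK by (simp add: f_def Q'_def)
        then show "z \<in> f ` M" using hM by blast
      qed
    qed
  qed
  moreover have "card (apts m - {x}) = t - 1"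
    using apts_card'[OF mL] apts_fin[OF mL] x m by (simp add: apts_def x_def)
  ultimately have cM: "card M = t - 1" using bij_betw_same_card by metis
  have MS: "M \<subseteq> LP P m" by (auto simp: M_def)
  have fin: "finite (LP P m)" using LP_fin P mL m by (simp add: x_def)
  have "card (LP P m - M) = 1" using card_Diff_subset[OF finite_subset[OF MS fin] MS] LP_card[OF P mL m(2)] cM t2 by simp
  then obtain h0 where h0: "LP P m - M = {h0}" by (auto simp: card_Suc_eq)
  show ?thesis
  proof (rule ex1I[of _ h0])
    show "h0 \<in> LP P m \<and> pts h0 \<inter> pts g = {}" using h0 by (auto simp: M_def)
    fix h assume "h \<in> LP P m \<and> pts h \<inter> pts g = {}"
    then have "h \<in> LP P m - M" by (auto simp: M_def)
    then show "h = h0" using h0 by auto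
  qed
qed

lemma grp_mem: "h \<in> grp g \<Longrightarrow> h \<in> LK \<and> \<psi> h = \<psi> g" by (auto simp: grp_def)
lemma grp_self: "g \<in> LK \<Longrightarrow> g \<in> grp g" by (auto simp: grp_def)

lemma grp_disj: assumes g: "g \<in> LK" and h: "h \<in> grp g" and k: "k \<in> grp g" and ne: "h \<noteq> k"
  shows "pts h \<inter> pts k = {}"
proof (cases "h = g \<or> k = g")
  case True then show ?thesis using h k ne by (auto simp: grp_def)
next
  case False
  show ?thesis
  proof (rule ccontr)
    assume "pts h \<inter> pts k \<noteq> {}"
    then obtain P where P: "P \<in> pts h" "P \<in> pts k" by blast
    have hk: "h \<in> LK" "k \<in> LK" "\<psi> h = \<psi> g" "\<psi> k = \<psi> g" "pts h \<inter> pts g = {}" "pts k \<inter> pts g = {}"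
      using h k False by (auto simp: grp_def)
    have PK: "P \<in> PK" "IK P h" "IK P k" using P by (auto simp: pts_def)
    have Pg: "\<not> IK P g" using hk(5) P PK by (auto simp: pts_def)
    have "AI (\<phi> P) (\<psi> g)" using inc[of P h] PK hk by simp
    then have "\<exists>!h'. h' \<in> LP P (\<psi> g) \<and> pts h' \<inter> pts g = {}" using disjoint_unique[OF PK(1) g refl _ Pg] by simp
    moreover have "h \<in> LP P (\<psi> g)" "k \<in> LP P (\<psi> g)" using hk PK by (auto simp: LP_def)
    ultimately show False using hk ne by blast
  qed
qed

lemma grp_cover: assumes g: "g \<in> LK" and P: "P \<in> PK" "AI (\<phi> P) (\<psi> g)"
  shows "\<exists>!h. h \<in> grp g \<and> IK P h"
proof (cases "IK P g")
  case True
  show ?thesis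
  proof (rule ex1I[of _ g])
    show "g \<in> grp g \<and> IK P g" using grp_self g True by simp
    fix h assume h: "h \<in> grp g \<and> IK P h"
    show "h = g"
    proof (rule ccontr)
      assume "h \<noteq> g"
      then have "pts h \<inter> pts g = {}" using h by (auto simp: grp_def)
      then show False using h True P by (auto simp: pts_def)
    qed
  qed
next
  case False
  obtain h0 where h0: "h0 \<in> LP P (\<psi> g)" "pts h0 \<inter> pts g = {}"
    and u: "\<And>h. h \<in> LP P (\<psi> g) \<Longrightarrow> pts h \<inter> pts g = {} \<Longrightarrow> h = h0"
    using disjoint_unique[OF P(1) g refl P(2) False] by blast
  show ?thesis
  proof (rule ex1I[of _ h0])
    show "h0 \<in> grp g \<and> IK P h0" using h0 by (auto simp: grp_def LP_def)
    fix h assume h: "h \<in> grp g \<and> IK P h"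
    then have "h \<noteq> g" using False by auto
    then have "pts h \<inter> pts g = {}" "h \<in> LP P (\<psi> g)" using h by (auto simp: grp_def LP_def)
    then show "h = h0" using u by blast
  qed
qed

lemma grp_eq: assumes g: "g \<in> LK" and h: "h \<in> grp g" shows "grp h = grp g"
proof -
  have hL: "h \<in> LK" "\<psi> h = \<psi> g" using h by (auto simp: grp_def)
  have gh: "g \<in> grp h" using h g by (auto simp: grp_def)
  show ?thesis
  proof
    show "grp h \<subseteq> grp g"
    proof
      fix k assume k: "k \<in> grp h"
      have "k = g \<or> pts k \<inter> pts g = {}" using grp_disj[OF hL(1) k gh] by blast
      then show "k \<in> grp g" using k hL by (auto simp: grp_def)
    qed
    show "grp g \<subseteq> grp h"
    proof
      fix k assume k: "k \<in> grp g"
      have "k = h \<or> pts k \<inter> pts h = {}" using grp_disj[OF g k h] by blast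
      then show "k \<in> grp h" using k hL by (auto simp: grp_def)
    qed
  qed
qed

lemma grp_meet: assumes g: "g \<in> LK" and h: "h \<in> LK" "\<psi> h = \<psi> g" "h \<notin> grp g"
  shows "\<exists>P Q. P \<noteq> Q \<and> P \<in> pts h \<inter> pts g \<and> Q \<in> pts h \<inter> pts g"
proof -
  obtain P where P: "P \<in> pts h" "P \<in> pts g" using h by (auto simp: grp_def)
  have bl: "pts h \<inter> fib (\<phi> P) = pts g \<inter> fib (\<phi> P)" using block_eq[of h g P] g h P by auto
  have "card (pts h \<inter> fib (\<phi> P)) = t" using block_card h P by simp
  then have "\<not> pts h \<inter> fib (\<phi> P) \<subseteq> {P}" using t2
    by (metis card.empty card_insert_disjoint empty_iff finite.emptyI insert_absorb nat.simps(3) not_numeral_le_zero numeral_2_eq_2 subset_singletonD Suc_le_mono one_le_numeral card_1_singleton_iff le_zero_eq)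
  then obtain Q where "Q \<in> pts h \<inter> fib (\<phi> P)" "Q \<noteq> P" by blast
  then show ?thesis using bl P by blast
qed

lemma grp_card: assumes g: "g \<in> LK" shows "card (grp g) = t"
proof -
  obtain x where x: "x \<in> A" "AI x (\<psi> g)" using line_meets_fib g apts_psi
    by (metis (mono_tags, lifting) apts_def ex_in_conv fib_nonempty image_is_empty mem_Collect_eq pts_card t2 card.empty mult_is_0 not_numeral_le_zero)
  define f where "f Q = (THE h. h \<in> grp g \<and> IK Q h)" for Q
  have fQ: "\<And>Q. Q \<in> fib x \<Longrightarrow> f Q \<in> grp g \<and> IK Q (f Q)"
    unfolding f_def by (rule theI') (use grp_cover g x in \<open>auto simp: fib_def\<close>)
  have fU: "\<And>Q h. Q \<in> fib x \<Longrightarrow> h \<in> grp g \<Longrightarrow> IK Q h \<Longrightarrow> f Q = h"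
    unfolding f_def by (rule the1_equality) (use grp_cover g x in \<open>auto simp: fib_def\<close>)
  have img: "f ` fib x = grp g"
  proof
    show "f ` fib x \<subseteq> grp g" using fQ by auto
    show "grp g \<subseteq> f ` fib x"
    proof
      fix h assume h: "h \<in> grp g"
      then have "AI x (\<psi> h)" using x by (auto simp: grp_def)
      then obtain Q where Q: "Q \<in> pts h \<inter> fib x" using line_meets_fib[of h x] h x by (auto simp: grp_def)
      then have "f Q = h" using fU h by (auto simp: pts_def)
      then show "h \<in> f ` fib x" using Q by auto
    qed
  qed
  have "card (fib x) = t * card (f ` fib x)"
  proof (rule card_fibres)
    show "finite (fib x)" using fib_fin x by simp
    fix h assume "h \<in> f ` fib x"
    then obtain Q0 where Q0: "Q0 \<in> fib x" "h = f Q0" by auto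
    have h: "h \<in> grp g" "IK Q0 h" using fQ Q0 by auto
    have hL: "h \<in> LK" using h grp_mem by blast
    have "{Q \<in> fib x. f Q = h} = pts h \<inter> fib x"
      using fQ fU h by (auto simp: pts_def fib_def)
    moreover have "Q0 \<in> pts h" "\<phi> Q0 = x" using h Q0 by (auto simp: pts_def fib_def)
    ultimately show "card {Q \<in> fib x. f Q = h} = t" using block_card[OF hL] by auto
  qed
  then show ?thesis using img fib_card x t2 by simp
qed

definition "G m = grp ` {g\<in>LK. \<psi> g = m}"

lemma G_card: assumes m: "m \<in> AL" shows "card (G m) = t"
proof -
  obtain g0 where g0: "g0 \<in> LK" "\<psi> g0 = m" using m imL by auto
  obtain x where x: "x \<in> apts m" using apts_card'[OF m] t2 by fastforce
  obtain P where P: "P \<in> fib x" using fib_nonempty x by (auto simp: apts_def)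
  have PK: "P \<in> PK" "AI (\<phi> P) m" using P x by (auto simp: fib_def apts_def)
  have "bij_betw grp (LP P m) (G m)"
  proof (rule bij_betw_imageI)
    show "inj_on grp (LP P m)"
    proof (rule inj_onI)
      fix h k assume hk: "h \<in> LP P m" "k \<in> LP P m" "grp h = grp k"
      have L: "h \<in> LK" "k \<in> LK" "IK P h" "IK P k" using hk by (auto simp: LP_def)
      then have "k \<in> grp h" using hk(3) grp_self by auto
      show "h = k"
      proof (rule ccontr)
        assume "h \<noteq> k"
        then have "pts h \<inter> pts k = {}" using \<open>k \<in> grp h\<close> by (auto simp: grp_def)
        then show False using L PK by (auto simp: pts_def)
      qed
    qed
    show "grp ` LP P m = G m"
    proof
      show "grp ` LP P m \<subseteq> G m" by (auto simp: LP_def G_def)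
      show "G m \<subseteq> grp ` LP P m"
      proof
        fix c assume "c \<in> G m"
        then obtain g where g: "g \<in> LK" "\<psi> g = m" "c = grp g" by (auto simp: G_def)
        then obtain h where h: "h \<in> grp g" "IK P h" using grp_cover[of g P] PK by auto
        have "grp h = c" using grp_eq g h by simp
        moreover have "h \<in> LP P m" using h g by (auto simp: LP_def grp_def)
        ultimately show "c \<in> grp ` LP P m" by blast
      qed
    qed
  qed
  then show ?thesis using LP_card PK bij_betw_same_card m by metis
qed

lemma G_fin: "m \<in> AL \<Longrightarrow> finite (G m)" using G_card t2 card.infinite by fastforce

end

context KAH begin

definition "bet d = (SOME f. bij_betw f d (Dirs - {d}))"
definition "gam m = (SOME f. bij_betw f (G m) (bet (dir m) m))"
definition "Lam g = gam (\<psi> g) (grp g)"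

lemma dir_Dirs: "m \<in> AL \<Longrightarrow> dir m \<in> Dirs" by (simp add: Dirs_def)

lemma Dirs_card_t: "d \<in> Dirs \<Longrightarrow> card d = t"
  using dir_card by (auto simp: Dirs_def)

lemma bet: assumes d: "d \<in> Dirs" shows "bij_betw (bet d) d (Dirs - {d})"
proof -
  have "card d = card (Dirs - {d})" using Dirs_card_t[OF d] Dirs_card d Dirs_fin by simp
  moreover have "finite d" using Dirs_card_t[OF d] t2 card.infinite by fastforce
  ultimately have "\<exists>f. bij_betw f d (Dirs - {d})" using finite_same_card_bij Dirs_fin by blast
  then show ?thesis unfolding bet_def by (rule someI_ex)
qed

lemma bet_m: assumes m: "m \<in> AL"
  shows "bet (dir m) m \<in> Dirs" "bet (dir m) m \<noteq> dir m"
  using bet[OF dir_Dirs[OF m]] in_dir[OF m] by (auto simp: bij_betw_def)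

lemma gam: assumes m: "m \<in> AL" shows "bij_betw (gam m) (G m) (bet (dir m) m)"
proof -
  have "card (G m) = card (bet (dir m) m)" using G_card[OF m] Dirs_card_t bet_m[OF m] by simp
  then have "\<exists>f. bij_betw f (G m) (bet (dir m) m)"
    using finite_same_card_bij G_fin[OF m] Dirs_card_t bet_m[OF m] t2 card.infinite
    by (metis not_numeral_le_zero)
  then show ?thesis unfolding gam_def by (rule someI_ex)
qed

lemma grp_in_G: "g \<in> LK \<Longrightarrow> grp g \<in> G (\<psi> g)" by (auto simp: G_def)

lemma Lam_in: assumes g: "g \<in> LK" shows "Lam g \<in> bet (dir (\<psi> g)) (\<psi> g)"
  using gam[OF psiL[OF g]] grp_in_G[OF g] by (auto simp: Lam_def bij_betw_def)

lemma Lam_L: assumes g: "g \<in> LK" shows "Lam g \<in> AL"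
  using Lam_in[OF g] bet_m[OF psiL[OF g]] dir_sub by blast

lemma Lam_dir: assumes g: "g \<in> LK" shows "dir (Lam g) = bet (dir (\<psi> g)) (\<psi> g)"
  using Lam_in[OF g] bet_m[OF psiL[OF g]] dir_of_mem by blast

lemma Lam_dir_ne: assumes g: "g \<in> LK" shows "dir (Lam g) \<noteq> dir (\<psi> g)"
  using Lam_dir[OF g] bet_m[OF psiL[OF g]] by simp

lemma Lam_nonpar: assumes g: "g \<in> LK" shows "\<not> apar (Lam g) (\<psi> g)"
  using Lam_dir_ne[OF g] dir_eq Lam_L psiL g by blast

lemma Lam_eq_iff: assumes g: "g \<in> LK" "h \<in> LK" "\<psi> g = \<psi> h"
  shows "Lam g = Lam h \<longleftrightarrow> h \<in> grp g"
proof -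
  have inj: "inj_on (gam (\<psi> g)) (G (\<psi> g))" using gam[OF psiL[OF g(1)]] by (simp add: bij_betw_def)
  have "grp g \<in> G (\<psi> g)" "grp h \<in> G (\<psi> g)" using grp_in_G[OF g(1)] grp_in_G[OF g(2)] g(3) by auto
  then have "Lam g = Lam h \<longleftrightarrow> grp g = grp h"
    using inj_onD[OF inj] g(3) unfolding Lam_def by metis
  also have "\<dots> \<longleftrightarrow> h \<in> grp g"
    using grp_eq[OF g(1)] grp_self g by (metis grp_eq)
  finally show ?thesis .
qed

lemma Lam_par_ne: assumes g: "g \<in> LK" "h \<in> LK" "dir (\<psi> g) = dir (\<psi> h)" "\<psi> g \<noteq> \<psi> h"
  shows "\<not> apar (Lam g) (Lam h)"
proof -
  have inj: "inj_on (bet (dir (\<psi> g))) (dir (\<psi> g))" using bet[OF dir_Dirs[OF psiL[OF g(1)]]] by (simp add: bij_betw_def)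
  have "\<psi> h \<in> dir (\<psi> g)" using g in_dir psiL by auto
  then have "bet (dir (\<psi> g)) (\<psi> g) \<noteq> bet (dir (\<psi> g)) (\<psi> h)"
    using inj_onD[OF inj] g in_dir psiL by blast
  then have "dir (Lam g) \<noteq> dir (Lam h)" using Lam_dir g by simp
  then show ?thesis using dir_eq Lam_L g by blast
qed

lemma Lam_surj: assumes m: "m \<in> AL" and l: "l \<in> bet (dir m) m"
  shows "\<exists>g\<in>LK. \<psi> g = m \<and> Lam g = l"
proof -
  have "l \<in> gam m ` G m" using gam[OF m] l by (simp add: bij_betw_def)
  then obtain c where c: "c \<in> G m" "gam m c = l" by blast
  then obtain g where g: "g \<in> LK" "\<psi> g = m" "c = grp g" by (auto simp: G_def)
  then show ?thesis using c by (auto simp: Lam_def)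
qed

end

context KAH begin

definition "rep d = (SOME m. m \<in> d)"
definition "dl d n = parl n (rep d)"

lemma Dirs_ne: "d \<in> Dirs \<Longrightarrow> rep d \<in> d"
  unfolding rep_def by (rule someI_ex) (auto simp: Dirs_def intro: in_dir)

lemma rep_L: "d \<in> Dirs \<Longrightarrow> rep d \<in> AL" using Dirs_ne dir_sub by blast

lemma dl: assumes d: "d \<in> Dirs" and n: "n \<in> A"
  shows "dl d n \<in> AL" "AI n (dl d n)" "dl d n \<in> d"
proof -
  have p: "parl n (rep d) \<in> AL" "AI n (parl n (rep d))" "apar (rep d) (parl n (rep d))"
    using parl[OF n rep_L[OF d]] by auto
  show "dl d n \<in> AL" "AI n (dl d n)" using p by (auto simp: dl_def)
  have "dir (rep d) = d" using dir_of_mem d Dirs_ne by blast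
  then show "dl d n \<in> d" using p by (auto simp: dl_def dir_def)
qed

lemma dl_uniq: assumes d: "d \<in> Dirs" and n: "n \<in> A" and m: "m \<in> d" "AI n m" shows "dl d n = m"
proof -
  have mL: "m \<in> AL" using dir_sub d m by blast
  have "dir m = dir (dl d n)" using dir_of_mem d m dl[OF d n] by metis
  then have "apar m (dl d n)" using dir_eq mL dl[OF d n] by blast
  then show ?thesis using apar_meet[of m "dl d n" n] n m dl[OF d n] by simp
qed

lemma dl_same: assumes d: "d \<in> Dirs" and n: "n \<in> A" "a \<in> A" shows "AI a (dl d n) \<longleftrightarrow> dl d a = dl d n"
  using dl_uniq[OF d n(2) dl(3)[OF d n(1)]] dl[OF d n(2)] by metis

lemma dl_sym: assumes d: "d \<in> Dirs" and n: "n \<in> A" "a \<in> A" shows "AI a (dl d n) \<longleftrightarrow> AI n (dl d a)"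
  using dl_same[OF d n] dl_same[OF d n(2) n(1)] by metis

lemma dl_dir: "d \<in> Dirs \<Longrightarrow> n \<in> A \<Longrightarrow> dir (dl d n) = d"
  using dl dir_of_mem by blast

lemma in_own_dir: "g \<in> LK \<Longrightarrow> \<psi> g \<in> dir (\<psi> g)" using in_dir psiL by blast

fun IH1 :: "'a + ('b set \<times> 'a) \<Rightarrow> 'b + 'a \<Rightarrow> bool" where
  "IH1 (Inl p) (Inl g) = IK p g"
| "IH1 (Inr (d, a)) (Inl g) = (d = dir (\<psi> g) \<and> AI a (Lam g))"
| "IH1 (Inr (d, a)) (Inr n) = AI a (dl d n)"
| "IH1 (Inl p) (Inr n) = False"

definition "PH1 = Inl ` PK \<union> Inr ` (Dirs \<times> A)"
definition "LH1 = Inl ` LK \<union> Inr ` A"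

lemma C4: "(L \<in> LH1 \<and> IH1 (Inl p) L \<and> IH1 (Inl q) L) \<longleftrightarrow> (\<exists>g. L = Inl g \<and> g \<in> LK \<and> IK p g \<and> IK q g)"
  by (cases L) (auto simp: LH1_def)

lemma C1: assumes p: "p \<in> PK" and d: "d \<in> Dirs" and a: "a \<in> A"
  shows "\<exists>!L. L \<in> LH1 \<and> IH1 (Inl p) L \<and> IH1 (Inr (d, a)) L"
proof -
  define x where "x = \<phi> p"
  have x: "x \<in> A" using phiA p by (simp add: x_def)
  define m where "m = dl d x"
  have m: "m \<in> AL" "AI x m" "m \<in> d" "dir m = d" using dl[OF d x] dl_dir[OF d x] by (auto simp: m_def)
  define l where "l = dl (bet d m) a"
  have bd: "bet d m \<in> Dirs" using bet_m[OF m(1)] m(4) by simp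
  have l: "l \<in> bet d m" "AI a l" using dl[OF bd a] by (auto simp: l_def)
  obtain g0 where g0: "g0 \<in> LK" "\<psi> g0 = m" "Lam g0 = l" using Lam_surj[OF m(1)] l m(4) by auto
  obtain h where h: "h \<in> grp g0" "IK p h" using grp_cover[OF g0(1) p] g0 m by (auto simp: x_def)
  have hL: "h \<in> LK" "\<psi> h = m" "Lam h = l" using grp_mem[OF h(1)] Lam_eq_iff[of g0 h] g0 h by auto
  show ?thesis
  proof (rule ex1I[of _ "Inl h"])
    show "Inl h \<in> LH1 \<and> IH1 (Inl p) (Inl h) \<and> IH1 (Inr (d, a)) (Inl h)"
      using hL h l m by (auto simp: LH1_def)
    fix L assume L: "L \<in> LH1 \<and> IH1 (Inl p) L \<and> IH1 (Inr (d, a)) L"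
    then obtain g where g: "L = Inl g" "g \<in> LK" "IK p g" "dir (\<psi> g) = d" "AI a (Lam g)"
      by (cases L) (auto simp: LH1_def)
    have "\<psi> g \<in> d" using in_own_dir g by auto
    then have pg: "\<psi> g = m" using dl_uniq[OF d x] inc[of p g] p g by (auto simp: m_def x_def)
    have "Lam g \<in> bet d m" using Lam_in[OF g(2)] pg g by simp
    then have "Lam g = l" using dl_uniq[OF bd a] g by (auto simp: l_def)
    then have "h \<in> grp g" using Lam_eq_iff[of g h] g hL pg by simp
    have "h = g"
    proof (rule ccontr)
      assume "h \<noteq> g"
      then have "pts h \<inter> pts g = {}" using \<open>h \<in> grp g\<close> by (auto simp: grp_def)
      then show False using g h p by (auto simp: pts_def)
    qed
    then show "L = Inl h" using g by simp
  qed
qed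

lemma two_pts: "m \<in> AL \<Longrightarrow> \<exists>a b. a \<noteq> b \<and> a \<in> apts m \<and> b \<in> apts m"
proof -
  assume m: "m \<in> AL"
  then have "card (apts m) \<ge> 2" using apts_card' t2 by simp
  then show ?thesis by (auto simp: numeral_2_eq_2 le_Suc_eq card_le_Suc_iff)
qed

lemma two_grp: "g \<in> LK \<Longrightarrow> \<exists>g1 g2. g1 \<noteq> g2 \<and> g1 \<in> grp g \<and> g2 \<in> grp g"
proof -
  assume g: "g \<in> LK"
  then have "card (grp g) \<ge> 2" using grp_card t2 by simp
  then show ?thesis by (auto simp: numeral_2_eq_2 le_Suc_eq card_le_Suc_iff)
qed

lemma C2: assumes d: "d \<in> Dirs" and a: "a \<in> A" "a' \<in> A" "a \<noteq> a'"
  shows "\<exists>L1 L2. L1 \<noteq> L2 \<and> L1 \<in> LH1 \<and> L2 \<in> LH1 \<and> IH1 (Inr (d, a)) L1 \<and> IH1 (Inr (d, a')) L1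
     \<and> IH1 (Inr (d, a)) L2 \<and> IH1 (Inr (d, a')) L2"
proof (cases "AI a' (dl d a)")
  case True
  obtain n1 n2 where n: "n1 \<noteq> n2" "n1 \<in> apts (dl d a)" "n2 \<in> apts (dl d a)" using two_pts dl[OF d a(1)] by blast
  have "\<And>n. n \<in> apts (dl d a) \<Longrightarrow> dl d n = dl d a" using dl_same[OF d a(1)] by (auto simp: apts_def)
  then have "IH1 (Inr (d, a)) (Inr n1) \<and> IH1 (Inr (d, a')) (Inr n1) \<and> IH1 (Inr (d, a)) (Inr n2) \<and> IH1 (Inr (d, a')) (Inr n2)"
    using n True dl[OF d a(1)] by auto
  moreover have "Inr n1 \<in> LH1" "Inr n2 \<in> LH1" using n by (auto simp: LH1_def apts_def)
  ultimately show ?thesis using n(1) by blast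
next
  case False
  define j where "j = join a a'"
  have j: "j \<in> AL" "AI a j" "AI a' j" using join a by (auto simp: j_def)
  have ne: "dir j \<noteq> d"
  proof
    assume "dir j = d"
    then have "j \<in> d" using in_dir j by auto
    then have "dl d a = j" using dl_uniq[OF d a(1)] j by simp
    then show False using False j by simp
  qed
  have "dir j \<in> Dirs - {d}" using ne dir_Dirs j by simp
  then have "dir j \<in> bet d ` d" using bet[OF d] by (simp add: bij_betw_def)
  then obtain m where m: "m \<in> d" "bet d m = dir j" by blast
  have mL: "m \<in> AL" "dir m = d" using m dir_sub d dir_of_mem by auto
  have "j \<in> bet (dir m) m" using m mL in_dir j by simp
  then obtain g0 where g0: "g0 \<in> LK" "\<psi> g0 = m" "Lam g0 = j" using Lam_surj[OF mL(1)] by blast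
  obtain g1 g2 where g12: "g1 \<noteq> g2" "g1 \<in> grp g0" "g2 \<in> grp g0" using two_grp g0 by blast
  have G1: "g1 \<in> LK" "\<psi> g1 = m" using grp_mem[OF g12(2)] g0 by auto
  have G2: "g2 \<in> LK" "\<psi> g2 = m" using grp_mem[OF g12(3)] g0 by auto
  have "Lam g1 = j" using Lam_eq_iff[of g0 g1] G1 g0 g12 by simp
  moreover have "Lam g2 = j" using Lam_eq_iff[of g0 g2] G2 g0 g12 by simp
  ultimately have "IH1 (Inr (d, a)) (Inl g1) \<and> IH1 (Inr (d, a')) (Inl g1)
     \<and> IH1 (Inr (d, a)) (Inl g2) \<and> IH1 (Inr (d, a')) (Inl g2)" using G1 G2 j mL by simp
  moreover have "Inl g1 \<in> LH1" "Inl g2 \<in> LH1" using G1 G2 by (auto simp: LH1_def)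
  moreover have "(Inl g1 :: 'b + 'a) \<noteq> Inl g2" using g12 by simp
  ultimately show ?thesis by blast
qed

lemma C3: assumes d: "d \<in> Dirs" "d' \<in> Dirs" "d \<noteq> d'" and a: "a \<in> A" "a' \<in> A"
  shows "\<exists>!L. L \<in> LH1 \<and> IH1 (Inr (d, a)) L \<and> IH1 (Inr (d', a')) L"
proof -
  have "dir (dl d a) \<noteq> dir (dl d' a')" using dl_dir d a by simp
  then have np: "\<not> apar (dl d a) (dl d' a')" using dir_eq dl(1) d a by blast
  then obtain n where n: "n \<in> A" "AI n (dl d a)" "AI n (dl d' a')"
    and nu: "\<And>n'. n' \<in> A \<Longrightarrow> AI n' (dl d a) \<Longrightarrow> AI n' (dl d' a') \<Longrightarrow> n' = n"
    using nonpar_meet1[of "dl d a" "dl d' a'"] dl(1) d a by blast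
  show ?thesis
  proof (rule ex1I[of _ "Inr n"])
    show "Inr n \<in> LH1 \<and> IH1 (Inr (d, a)) (Inr n) \<and> IH1 (Inr (d', a')) (Inr n)"
      using n dl_sym d a by (auto simp: LH1_def)
    fix L assume L: "L \<in> LH1 \<and> IH1 (Inr (d, a)) L \<and> IH1 (Inr (d', a')) L"
    then obtain n' where "L = Inr n'" "n' \<in> A" "AI a (dl d n')" "AI a' (dl d' n')" using d
      by (cases L) (auto simp: LH1_def)
    then have "AI n' (dl d a)" "AI n' (dl d' a')" using dl_sym d a by auto
    then show "L = Inr n" using nu \<open>L = Inr n'\<close> \<open>n' \<in> A\<close> by simp
  qed
qed

fun phiH :: "'a + ('b set \<times> 'a) \<Rightarrow> 'a + ('b set \<times> 'a)" where
  "phiH (Inl p) = Inl (\<phi> p)"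
| "phiH (Inr (d, a)) = Inr (d, undefined)"

lemma pt_nb_sym_gen: "pt_nb P L I x y \<longleftrightarrow> pt_nb P L I y x" unfolding pt_nb_def by blast

lemma ptnb_ll: assumes "p \<in> PK" "q \<in> PK" shows "pt_nb PH1 LH1 IH1 (Inl p) (Inl q) \<longleftrightarrow> \<phi> p = \<phi> q"
proof -
  have "pt_nb PH1 LH1 IH1 (Inl p) (Inl q) \<longleftrightarrow> pt_nb PK LK IK p q"
  proof
    assume "pt_nb PH1 LH1 IH1 (Inl p) (Inl q)"
    then consider "p = q" | L1 L2 where "L1 \<in> LH1" "L2 \<in> LH1" "L1 \<noteq> L2" "IH1 (Inl p) L1" "IH1 (Inl q) L1" "IH1 (Inl p) L2" "IH1 (Inl q) L2"
      unfolding pt_nb_def by blast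
    then show "pt_nb PK LK IK p q"
    proof cases
      case 1 then show ?thesis by (simp add: pt_nb_def)
    next
      case 2
      then obtain g1 g2 where "L1 = Inl g1" "g1 \<in> LK" "IK p g1" "IK q g1" "L2 = Inl g2" "g2 \<in> LK" "IK p g2" "IK q g2"
        using C4 by metis
      then show ?thesis using 2 unfolding pt_nb_def by blast
    qed
  next
    assume "pt_nb PK LK IK p q"
    then consider "p = q" | g1 g2 where "g1 \<in> LK" "g2 \<in> LK" "g1 \<noteq> g2" "IK p g1" "IK q g1" "IK p g2" "IK q g2"
      unfolding pt_nb_def by blast
    then show "pt_nb PH1 LH1 IH1 (Inl p) (Inl q)"
    proof cases
      case 1 then show ?thesis by (simp add: pt_nb_def)
    next
      case 2
      have "Inl g1 \<in> LH1" "Inl g2 \<in> LH1" using 2 by (auto simp: LH1_def)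
      then show ?thesis using 2 unfolding pt_nb_def by (intro disjI2) (rule bexI[of _ "Inl g1"], rule bexI[of _ "Inl g2"], auto)
    qed
  qed
  then show ?thesis using nbp assms by simp
qed

lemma ptnb_lr: assumes "p \<in> PK" "d \<in> Dirs" "a \<in> A" shows "\<not> pt_nb PH1 LH1 IH1 (Inl p) (Inr (d, a))"
  using C1[OF assms] unfolding pt_nb_def by blast

lemma ptnb_rr: assumes "d \<in> Dirs" "d' \<in> Dirs" "a \<in> A" "a' \<in> A"
  shows "pt_nb PH1 LH1 IH1 (Inr (d, a)) (Inr (d', a')) \<longleftrightarrow> d = d'"
proof (cases "d = d'")
  case True
  show ?thesis
  proof (cases "a = a'")
    case True then show ?thesis using \<open>d = d'\<close> by (simp add: pt_nb_def)
  next
    case False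
    then show ?thesis using C2[OF assms(1) assms(3,4) False] True unfolding pt_nb_def by blast
  qed
next
  case False
  then show ?thesis using C3[OF assms(1,2) False assms(3,4)] unfolding pt_nb_def by auto
qed

lemma ptnbH: assumes "X \<in> PH1" "Y \<in> PH1" shows "pt_nb PH1 LH1 IH1 X Y \<longleftrightarrow> phiH X = phiH Y"
proof -
  consider p q where "X = Inl p" "Y = Inl q" "p \<in> PK" "q \<in> PK"
    | p d a where "X = Inl p" "Y = Inr (d, a)" "p \<in> PK" "d \<in> Dirs" "a \<in> A"
    | p d a where "Y = Inl p" "X = Inr (d, a)" "p \<in> PK" "d \<in> Dirs" "a \<in> A"
    | d a d' a' where "X = Inr (d, a)" "Y = Inr (d', a')" "d \<in> Dirs" "a \<in> A" "d' \<in> Dirs" "a' \<in> A"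
    using assms by (auto simp: PH1_def)
  then show ?thesis
  proof cases
    case 1 then show ?thesis using ptnb_ll by simp
  next
    case 2 then show ?thesis using ptnb_lr by simp
  next
    case 3 then show ?thesis using ptnb_lr[of p d a] pt_nb_sym_gen[of PH1 LH1 IH1 X Y] by simp
  next
    case 4 then show ?thesis using ptnb_rr by simp
  qed
qed

fun psiH :: "'b + 'a \<Rightarrow> 'b + 'a" where
  "psiH (Inl g) = Inl (\<psi> g)"
| "psiH (Inr n) = Inr undefined"

lemma A_ne: "\<exists>a. a \<in> A" using triangle by blast

lemma ptsH_l: assumes g: "g \<in> LK"
  shows "{X\<in>PH1. IH1 X (Inl g)} = Inl ` pts g \<union> Inr ` ({dir (\<psi> g)} \<times> apts (Lam g))"
proof -
  have "dir (\<psi> g) \<in> Dirs" using dir_Dirs psiL g by blast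
  then show ?thesis by (auto simp: PH1_def pts_def apts_def elim: IH1.elims)
qed

lemma ptsH_r: assumes n: "n \<in> A"
  shows "{X\<in>PH1. IH1 X (Inr n)} = Inr ` (SIGMA d:Dirs. apts (dl d n))"
  using dl by (auto simp: PH1_def apts_def)

lemma lnH_ll_eq: assumes g: "g \<in> LK" "h \<in> LK" "\<psi> g = \<psi> h"
  shows "ln_nb PH1 LH1 IH1 (Inl g) (Inl h)"
proof (cases "h \<in> grp g")
  case True
  then have L: "Lam g = Lam h" using Lam_eq_iff g by simp
  obtain a1 a2 where a: "a1 \<noteq> a2" "a1 \<in> apts (Lam g)" "a2 \<in> apts (Lam g)" using two_pts Lam_L g by blast
  have d: "dir (\<psi> g) \<in> Dirs" using dir_Dirs psiL g by blast
  have "Inr (dir (\<psi> g), a1) \<in> PH1" "Inr (dir (\<psi> g), a2) \<in> PH1" using a d by (auto simp: PH1_def apts_def)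
  moreover have "IH1 (Inr (dir (\<psi> g), a1)) (Inl g)" "IH1 (Inr (dir (\<psi> g), a2)) (Inl g)"
    "IH1 (Inr (dir (\<psi> g), a1)) (Inl h)" "IH1 (Inr (dir (\<psi> g), a2)) (Inl h)"
    using a L g by (auto simp: apts_def)
  ultimately show ?thesis using a(1) unfolding ln_nb_def by blast
next
  case False
  then obtain P Q where PQ: "P \<noteq> Q" "P \<in> pts h \<inter> pts g" "Q \<in> pts h \<inter> pts g" using grp_meet g by metis
  have "Inl P \<in> PH1" "Inl Q \<in> PH1" using PQ by (auto simp: PH1_def pts_def)
  moreover have "IH1 (Inl P) (Inl g)" "IH1 (Inl Q) (Inl g)" "IH1 (Inl P) (Inl h)" "IH1 (Inl Q) (Inl h)"
    using PQ by (auto simp: pts_def)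
  ultimately show ?thesis using PQ(1) unfolding ln_nb_def by blast
qed

lemma lnH_ll_ne: assumes g: "g \<in> LK" "h \<in> LK" "\<psi> g \<noteq> \<psi> h"
  shows "\<not> ln_nb PH1 LH1 IH1 (Inl g) (Inl h)"
proof
  assume "ln_nb PH1 LH1 IH1 (Inl g) (Inl h)"
  then obtain X Y where XY: "X \<in> PH1" "Y \<in> PH1" "X \<noteq> Y" "IH1 X (Inl g)" "IH1 Y (Inl g)" "IH1 X (Inl h)" "IH1 Y (Inl h)"
    using g unfolding ln_nb_def by auto
  have inf_case: "\<And>d a Z. Inr (d, a) \<in> PH1 \<Longrightarrow> Z \<in> PH1 \<Longrightarrow> Z \<noteq> Inr (d, a) \<Longrightarrow> IH1 (Inr (d, a)) (Inl g) \<Longrightarrow> IH1 (Inr (d, a)) (Inl h)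
     \<Longrightarrow> IH1 Z (Inl g) \<Longrightarrow> IH1 Z (Inl h) \<Longrightarrow> False"
  proof -
    fix d a Z assume X: "Inr (d, a) \<in> PH1" and Z: "Z \<in> PH1" "Z \<noteq> Inr (d, a)" and da: "IH1 (Inr (d, a)) (Inl g)" "IH1 (Inr (d, a)) (Inl h)"
      and Zi: "IH1 Z (Inl g)" "IH1 Z (Inl h)"
    have aA: "a \<in> A" using X by (auto simp: PH1_def)
    have dd: "dir (\<psi> g) = dir (\<psi> h)" "AI a (Lam g)" "AI a (Lam h)" using da by auto
    have np: "\<not> apar (Lam g) (Lam h)" using Lam_par_ne g dd by blast
    have par: "apar (\<psi> g) (\<psi> h)" using dir_eq psiL g dd by blast
    show False
    proof (cases Z)
      case (Inl P)
      then have "P \<in> PK" "IK P g" "IK P h" using Z Zi by (auto simp: PH1_def)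
      then show False using inc[of P g] inc[of P h] g par apar_meet phiA by blast
    next
      case (Inr c)
      then obtain d' a' where c: "Z = Inr (d', a')" "a' \<in> A" using Z by (auto simp: PH1_def)
      then have "d' = d" "a' \<noteq> a" "AI a' (Lam g)" "AI a' (Lam h)" using Zi da Z(2) by auto
      then have "Lam g = Lam h" using line_eq[of a a' "Lam g" "Lam h"] aA c Lam_L g dd by auto
      then show False using np apar_refl by simp
    qed
  qed
  show False
  proof (cases X)
    case (Inr c)
    then obtain d a where "X = Inr (d, a)" by (cases c) auto
    then show False using inf_case[of d a Y] XY by auto
  next
    case (Inl P)
    show False
    proof (cases Y)
      case (Inr c)
      then obtain d a where "Y = Inr (d, a)" by (cases c) auto
      then show False using inf_case[of d a X] XY by auto
    next
      case (Inl Q)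
      have "P \<in> PK" "Q \<in> PK" "IK P g" "IK Q g" "IK P h" "IK Q h" "P \<noteq> Q"
        using XY \<open>X = Inl P\<close> Inl by (auto simp: PH1_def)
      then show False using meet_le1 g by blast
    qed
  qed
qed

lemma lnH_lr: assumes g: "g \<in> LK" and n: "n \<in> A"
  shows "\<not> ln_nb PH1 LH1 IH1 (Inl g) (Inr n)"
proof
  assume "ln_nb PH1 LH1 IH1 (Inl g) (Inr n)"
  then obtain X Y where XY: "X \<in> PH1" "Y \<in> PH1" "X \<noteq> Y" "IH1 X (Inl g)" "IH1 Y (Inl g)" "IH1 X (Inr n)" "IH1 Y (Inr n)"
    unfolding ln_nb_def by auto
  obtain d a where X: "X = Inr (d, a)" "d \<in> Dirs" "a \<in> A" using XY by (cases X) (auto simp: PH1_def)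
  obtain d' a' where Y: "Y = Inr (d', a')" "d' \<in> Dirs" "a' \<in> A" using XY by (cases Y) (auto simp: PH1_def)
  have e: "d = dir (\<psi> g)" "d' = dir (\<psi> g)" "AI a (Lam g)" "AI a' (Lam g)" "AI a (dl d n)" "AI a' (dl d n)"
    using XY X Y by auto
  have "a \<noteq> a'" using XY X Y e by auto
  then have "Lam g = dl d n" using line_eq[of a a' "Lam g" "dl d n"] e X Y Lam_L g dl n by auto
  then have "dir (Lam g) = d" using dl_dir X n by simp
  then show False using Lam_dir_ne g e by simp
qed

lemma lnH_rr: assumes n: "n \<in> A" "n' \<in> A" shows "ln_nb PH1 LH1 IH1 (Inr n) (Inr n')"
proof (cases "n = n'")
  case True then show ?thesis by (simp add: ln_nb_def)
next
  case False
  define j where "j = join n n'"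
  have j: "j \<in> AL" "AI n j" "AI n' j" using join n False by (auto simp: j_def)
  define d where "d = dir j"
  have d: "d \<in> Dirs" "j \<in> d" using dir_Dirs in_dir j by (auto simp: d_def)
  have e: "dl d n = j" "dl d n' = j" using dl_uniq d n j by auto
  obtain a1 a2 where a: "a1 \<noteq> a2" "a1 \<in> apts j" "a2 \<in> apts j" using two_pts j by blast
  have "Inr (d, a1) \<in> PH1" "Inr (d, a2) \<in> PH1" using a d by (auto simp: PH1_def apts_def)
  moreover have "IH1 (Inr (d, a1)) (Inr n)" "IH1 (Inr (d, a2)) (Inr n)" "IH1 (Inr (d, a1)) (Inr n')" "IH1 (Inr (d, a2)) (Inr n')"
    using a e by (auto simp: apts_def)
  ultimately show ?thesis using a(1) unfolding ln_nb_def by blast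
qed

lemma ln_nb_sym_gen: "ln_nb P L I x y \<longleftrightarrow> ln_nb P L I y x" unfolding ln_nb_def by blast

lemma lnH: assumes "L \<in> LH1" "M \<in> LH1" shows "ln_nb PH1 LH1 IH1 L M \<longleftrightarrow> psiH L = psiH M"
proof -
  consider g h where "L = Inl g" "M = Inl h" "g \<in> LK" "h \<in> LK"
    | g n where "L = Inl g" "M = Inr n" "g \<in> LK" "n \<in> A"
    | g n where "M = Inl g" "L = Inr n" "g \<in> LK" "n \<in> A"
    | n n' where "L = Inr n" "M = Inr n'" "n \<in> A" "n' \<in> A"
    using assms by (auto simp: LH1_def)
  then show ?thesis
  proof cases
    case 1 then show ?thesis using lnH_ll_eq lnH_ll_ne by (cases "\<psi> g = \<psi> h") auto
  next
    case 2 then show ?thesis using lnH_lr by simp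
  next
    case 3 then show ?thesis using lnH_lr[of g n] ln_nb_sym_gen[of PH1 LH1 IH1 L M] by simp
  next
    case 4 then show ?thesis using lnH_rr by simp
  qed
qed

end

context KAH begin

lemma ax_join: assumes "X \<in> PH1" "Y \<in> PH1" shows "\<exists>L\<in>LH1. IH1 X L \<and> IH1 Y L"
proof -
  consider p q where "X = Inl p" "Y = Inl q" "p \<in> PK" "q \<in> PK"
    | p d a where "X = Inl p" "Y = Inr (d, a)" "p \<in> PK" "d \<in> Dirs" "a \<in> A"
    | p d a where "Y = Inl p" "X = Inr (d, a)" "p \<in> PK" "d \<in> Dirs" "a \<in> A"
    | d a d' a' where "X = Inr (d, a)" "Y = Inr (d', a')" "d \<in> Dirs" "a \<in> A" "d' \<in> Dirs" "a' \<in> A"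
    using assms by (auto simp: PH1_def)
  then show ?thesis
  proof cases
    case 1
    then obtain g where "g \<in> LK" "IK p g" "IK q g" using conn by blast
    then show ?thesis using 1 by (intro bexI[of _ "Inl g"]) (auto simp: LH1_def)
  next
    case 2 then show ?thesis using C1 by blast
  next
    case 3 then show ?thesis using C1 by blast
  next
    case 4
    show ?thesis
    proof (cases "d = d'")
      case True
      show ?thesis
      proof (cases "a = a'")
        case True
        then show ?thesis using 4 \<open>d = d'\<close> dl by (intro bexI[of _ "Inr a"]) (auto simp: LH1_def)
      next
        case False
        then show ?thesis using C2[of d a a'] 4 True by blast
      qed
    next
      case False
      then show ?thesis using C3[of d d' a a'] 4 by blast
    qed
  qed
qed

lemma ax_meet: assumes "L \<in> LH1" "M \<in> LH1" shows "\<exists>X\<in>PH1. IH1 X L \<and> IH1 X M"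
proof -
  have ll: "\<And>g h. g \<in> LK \<Longrightarrow> h \<in> LK \<Longrightarrow> \<exists>X\<in>PH1. IH1 X (Inl g) \<and> IH1 X (Inl h)"
  proof -
    fix g h assume g: "g \<in> LK" and h: "h \<in> LK"
    show "\<exists>X\<in>PH1. IH1 X (Inl g) \<and> IH1 X (Inl h)"
    proof (cases "\<exists>p\<in>PK. IK p g \<and> IK p h")
      case True
      then obtain p where "p \<in> PK" "IK p g" "IK p h" by blast
      then show ?thesis by (intro bexI[of _ "Inl p"]) (auto simp: PH1_def)
    next
      case False
      then have par: "apar (\<psi> g) (\<psi> h)" using parK g h by (simp add: apar_def)
      then have dd: "dir (\<psi> g) = dir (\<psi> h)" using dir_eq psiL g h by blast
      have dD: "dir (\<psi> g) \<in> Dirs" using dir_Dirs psiL g by blast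
      show ?thesis
      proof (cases "\<psi> g = \<psi> h")
        case True
        have "h \<in> grp g"
        proof (rule ccontr)
          assume "h \<notin> grp g"
          then show False using grp_meet[of g h] g h True False by (auto simp: pts_def)
        qed
        then have L: "Lam g = Lam h" using Lam_eq_iff g h True by simp
        obtain a where a: "a \<in> apts (Lam g)" using two_pts Lam_L g by blast
        show ?thesis using a L dd dD by (intro bexI[of _ "Inr (dir (\<psi> g), a)"]) (auto simp: apts_def PH1_def)
      next
        case ne: False
        have "\<not> apar (Lam g) (Lam h)" using Lam_par_ne g h dd ne by blast
        then obtain a where a: "a \<in> A" "AI a (Lam g)" "AI a (Lam h)" using nonpar_meet1 Lam_L g h by blast
        show ?thesis using a dd dD by (intro bexI[of _ "Inr (dir (\<psi> g), a)"]) (auto simp: PH1_def)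
      qed
    qed
  qed
  have lr: "\<And>g n. g \<in> LK \<Longrightarrow> n \<in> A \<Longrightarrow> \<exists>X\<in>PH1. IH1 X (Inl g) \<and> IH1 X (Inr n)"
  proof -
    fix g n assume g: "g \<in> LK" and n: "n \<in> A"
    define d where "d = dir (\<psi> g)"
    have dD: "d \<in> Dirs" using dir_Dirs psiL g by (simp add: d_def)
    have "dir (Lam g) \<noteq> dir (dl d n)" using Lam_dir_ne g dl_dir dD n by (simp add: d_def)
    then have "\<not> apar (Lam g) (dl d n)" using dir_eq Lam_L g dl dD n by blast
    then obtain a where a: "a \<in> A" "AI a (Lam g)" "AI a (dl d n)" using nonpar_meet1 Lam_L g dl dD n by blast
    show "\<exists>X\<in>PH1. IH1 X (Inl g) \<and> IH1 X (Inr n)"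
      using a dD by (intro bexI[of _ "Inr (d, a)"]) (auto simp: PH1_def d_def)
  qed
  have rr: "\<And>n n'. n \<in> A \<Longrightarrow> n' \<in> A \<Longrightarrow> \<exists>X\<in>PH1. IH1 X (Inr n) \<and> IH1 X (Inr n')"
  proof -
    fix n n' assume n: "n \<in> A" "n' \<in> A"
    have "ln_nb PH1 LH1 IH1 (Inr n) (Inr n')" using lnH_rr n by simp
    then show "\<exists>X\<in>PH1. IH1 X (Inr n) \<and> IH1 X (Inr n')"
    proof (cases "n = n'")
      case True
      obtain d where d: "d \<in> Dirs" using Dirs_card by fastforce
      then show ?thesis using True n dl by (intro bexI[of _ "Inr (d, n)"]) (auto simp: PH1_def)
    next
      case False
      then show ?thesis using \<open>ln_nb PH1 LH1 IH1 (Inr n) (Inr n')\<close> unfolding ln_nb_def by blast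
    qed
  qed
  show ?thesis using assms ll lr rr by (auto simp: LH1_def) (metis lr)
qed

lemma apts_Lam_card: "g \<in> LK \<Longrightarrow> card (apts (Lam g)) = t" using apts_card' Lam_L by blast
lemma apts_dl_card: "d \<in> Dirs \<Longrightarrow> n \<in> A \<Longrightarrow> card (apts (dl d n)) = t" using apts_card' dl by blast
lemma apts_fin': "m \<in> AL \<Longrightarrow> finite (apts m)" by (rule apts_fin)

lemma card_sum_img: "finite S \<Longrightarrow> finite T \<Longrightarrow> card (Inl ` S \<union> Inr ` T) = card S + card T"
  by (subst card_Un_disjoint) (auto simp: card_image)

lemma line_card: assumes L: "L \<in> LH1"
  shows "finite {X\<in>PH1. IH1 X L} \<and> card {X\<in>PH1. IH1 X L} = t * (t + 1)"
proof (cases L)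
  case (Inl g)
  then have g: "g \<in> LK" using L by (auto simp: LH1_def)
  have f1: "finite (pts g)" "finite ({dir (\<psi> g)} \<times> apts (Lam g))" using pts_fin g apts_fin Lam_L by auto
  have cs: "card ({dir (\<psi> g)} \<times> apts (Lam g)) = t"
    using card_cartesian_product_singleton[of "dir (\<psi> g)" "apts (Lam g)"] apts_Lam_card g by simp
  have "card (Inl ` pts g \<union> Inr ` ({dir (\<psi> g)} \<times> apts (Lam g))) = t * t + t"
    using card_sum_img[OF f1] pts_card g cs by simp
  then show ?thesis using ptsH_l[OF g] f1 Inl by (simp add: algebra_simps)
next
  case (Inr n)
  then have n: "n \<in> A" using L by (auto simp: LH1_def)
  have fin: "finite (SIGMA d:Dirs. apts (dl d n))" using Dirs_fin apts_fin dl n by auto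
  have "card (SIGMA d:Dirs. apts (dl d n)) = (\<Sum>d\<in>Dirs. t)"
    using card_SigmaI[OF Dirs_fin, of "\<lambda>d. apts (dl d n)"] apts_fin dl n apts_dl_card by simp
  then have "card (Inr ` (SIGMA d:Dirs. apts (dl d n))) = (t + 1) * t" using Dirs_card by (simp add: card_image)
  then show ?thesis using ptsH_r[OF n] fin Inr by (simp add: algebra_simps)
qed

lemma nb_count: assumes L: "L \<in> LH1" and X: "X \<in> PH1" "IH1 X L"
  shows "card {Y\<in>PH1. IH1 Y L \<and> pt_nb PH1 LH1 IH1 X Y} = t"
proof -
  have eq: "{Y\<in>PH1. IH1 Y L \<and> pt_nb PH1 LH1 IH1 X Y} = {Y\<in>PH1. IH1 Y L \<and> phiH X = phiH Y}"
    using ptnbH X by auto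
  show ?thesis
  proof (cases L)
    case (Inl g)
    then have g: "g \<in> LK" using L by (auto simp: LH1_def)
    show ?thesis
    proof (cases X)
      case (Inl p)
      then have p: "p \<in> pts g" using X Inl \<open>L = Inl g\<close> by (auto simp: PH1_def pts_def)
      have "{Y\<in>PH1. IH1 Y L \<and> phiH X = phiH Y} = Inl ` {q\<in>pts g. \<phi> q = \<phi> p}"
        using \<open>L = Inl g\<close> Inl by (auto simp: PH1_def pts_def elim: IH1.elims)
      then show ?thesis using eq fib_line_card[OF g p] by (simp add: card_image)
    next
      case (Inr c)
      then obtain d a where da: "X = Inr (d, a)" by (cases c) auto
      then have dd: "d = dir (\<psi> g)" using X \<open>L = Inl g\<close> by auto
      have "{Y\<in>PH1. IH1 Y L \<and> phiH X = phiH Y} = Inr ` ({d} \<times> apts (Lam g))"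
        using \<open>L = Inl g\<close> da dd dir_Dirs psiL g by (auto simp: PH1_def apts_def elim: IH1.elims)
      moreover have "card ({d} \<times> apts (Lam g)) = t"
        using card_cartesian_product_singleton[of d "apts (Lam g)"] apts_Lam_card g by simp
      ultimately show ?thesis using eq by (simp add: card_image)
    qed
  next
    case (Inr n)
    then have n: "n \<in> A" using L by (auto simp: LH1_def)
    obtain d a where da: "X = Inr (d, a)" "d \<in> Dirs" using X Inr by (cases X) (auto simp: PH1_def)
    have "{Y\<in>PH1. IH1 Y L \<and> phiH X = phiH Y} = Inr ` ({d} \<times> apts (dl d n))"
      using Inr da by (auto simp: PH1_def apts_def elim: IH1.elims)
    moreover have "card ({d} \<times> apts (dl d n)) = t"
      using card_cartesian_product_singleton[of d "apts (dl d n)"] apts_dl_card[OF da(2) n] by simp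
    ultimately show ?thesis using eq by (simp add: card_image)
  qed
qed

end

context KAH begin

fun I2 :: "'a + ('b set \<times> 'a) \<Rightarrow> 'b + 'a \<Rightarrow> bool" where
  "I2 (Inl x) (Inl m) = AI x m"
| "I2 (Inr (d, u)) (Inl m) = (m \<in> d)"
| "I2 (Inr c) (Inr n) = True"
| "I2 (Inl x) (Inr n) = False"

lemma P2_eq: "phiH ` PH1 = Inl ` A \<union> (\<lambda>d. Inr (d, undefined::'a)) ` Dirs"
proof
  show "phiH ` PH1 \<subseteq> Inl ` A \<union> (\<lambda>d. Inr (d, undefined::'a)) ` Dirs"
    using phiA by (auto simp: PH1_def)
  show "Inl ` A \<union> (\<lambda>d. Inr (d, undefined::'a)) ` Dirs \<subseteq> phiH ` PH1"
  proof
    fix z assume "z \<in> Inl ` A \<union> (\<lambda>d. Inr (d, undefined::'a)) ` Dirs"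
    then consider x where "z = Inl x" "x \<in> A" | d where "z = Inr (d, undefined)" "d \<in> Dirs" by blast
    then show "z \<in> phiH ` PH1"
    proof cases
      case 1
      then obtain p where "p \<in> PK" "\<phi> p = x" using imP by auto
      then show ?thesis using 1 by (intro image_eqI[of _ _ "Inl p"]) (auto simp: PH1_def)
    next
      case 2
      obtain a where "a \<in> A" using A_ne by blast
      then show ?thesis using 2 by (intro image_eqI[of _ _ "Inr (d, a)"]) (auto simp: PH1_def)
    qed
  qed
qed

lemma L2_eq: "psiH ` LH1 = Inl ` AL \<union> {Inr (undefined::'a)}"
proof
  show "psiH ` LH1 \<subseteq> Inl ` AL \<union> {Inr (undefined::'a)}" using psiL by (auto simp: LH1_def)
  show "Inl ` AL \<union> {Inr (undefined::'a)} \<subseteq> psiH ` LH1"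
  proof
    fix z assume "z \<in> Inl ` AL \<union> {Inr (undefined::'a)}"
    then consider m where "z = Inl m" "m \<in> AL" | "z = Inr undefined" by blast
    then show "z \<in> psiH ` LH1"
    proof cases
      case 1
      then obtain g where "g \<in> LK" "\<psi> g = m" using imL by auto
      then show ?thesis using 1 by (intro image_eqI[of _ _ "Inl g"]) (auto simp: LH1_def)
    next
      case 2
      obtain a where "a \<in> A" using A_ne by blast
      then show ?thesis using 2 by (intro image_eqI[of _ _ "Inr a"]) (auto simp: LH1_def)
    qed
  qed
qed

lemma dir_mem_eq: "d \<in> Dirs \<Longrightarrow> d' \<in> Dirs \<Longrightarrow> m \<in> d \<Longrightarrow> m \<in> d' \<Longrightarrow> d = d'"
  using dir_of_mem by metis

lemma proj_ax1: assumes P: "p \<in> phiH ` PH1" "q \<in> phiH ` PH1" "p \<noteq> q"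
  shows "\<exists>!g. g \<in> psiH ` LH1 \<and> I2 p g \<and> I2 q g"
proof -
  have PP: "p \<in> Inl ` A \<union> (\<lambda>d. Inr (d, undefined::'a)) ` Dirs" "q \<in> Inl ` A \<union> (\<lambda>d. Inr (d, undefined::'a)) ` Dirs"
    using P P2_eq by auto
  have LL: "psiH ` LH1 = Inl ` AL \<union> {Inr (undefined::'a)}" by (rule L2_eq)
  have aff2: "\<And>x d. x \<in> A \<Longrightarrow> d \<in> Dirs \<Longrightarrow> \<exists>!g. g \<in> Inl ` AL \<union> {Inr (undefined::'a)} \<and> I2 (Inl x) g \<and> I2 (Inr (d, undefined)) g"
  proof -
    fix x d assume x: "x \<in> A" and d: "d \<in> Dirs"
    show "\<exists>!g. g \<in> Inl ` AL \<union> {Inr (undefined::'a)} \<and> I2 (Inl x) g \<and> I2 (Inr (d, undefined)) g"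
    proof (rule ex1I[of _ "Inl (dl d x)"])
      show "Inl (dl d x) \<in> Inl ` AL \<union> {Inr (undefined::'a)} \<and> I2 (Inl x) (Inl (dl d x)) \<and> I2 (Inr (d, undefined)) (Inl (dl d x))"
        using dl[OF d x] by auto
      fix g assume g: "g \<in> Inl ` AL \<union> {Inr (undefined::'a)} \<and> I2 (Inl x) g \<and> I2 (Inr (d, undefined)) g"
      then obtain m where "g = Inl m" "m \<in> AL" "AI x m" "m \<in> d" by auto
      then show "g = Inl (dl d x)" using dl_uniq[OF d x] by simp
    qed
  qed
  from PP show ?thesis unfolding LL
  proof (elim UnE imageE)
    fix x y assume xy: "x \<in> A" "p = Inl x" "y \<in> A" "q = Inl y"
    then have ne: "x \<noteq> y" using P by auto
    show "\<exists>!g. g \<in> Inl ` AL \<union> {Inr (undefined::'a)} \<and> I2 p g \<and> I2 q g"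
    proof (rule ex1I[of _ "Inl (join x y)"])
      show "Inl (join x y) \<in> Inl ` AL \<union> {Inr (undefined::'a)} \<and> I2 p (Inl (join x y)) \<and> I2 q (Inl (join x y))"
        using join[OF xy(1,3) ne] xy by auto
      fix g assume g: "g \<in> Inl ` AL \<union> {Inr (undefined::'a)} \<and> I2 p g \<and> I2 q g"
      then obtain m where "g = Inl m" "m \<in> AL" "AI x m" "AI y m" using xy by auto
      then show "g = Inl (join x y)" using join_uniq[OF xy(1,3) ne] by simp
    qed
  next
    fix x d assume "x \<in> A" "p = Inl x" "d \<in> Dirs" "q = Inr (d, undefined)"
    then show "\<exists>!g. g \<in> Inl ` AL \<union> {Inr (undefined::'a)} \<and> I2 p g \<and> I2 q g" using aff2 by simp
  next
    fix x d assume "x \<in> A" "q = Inl x" "d \<in> Dirs" "p = Inr (d, undefined)"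
    then show "\<exists>!g. g \<in> Inl ` AL \<union> {Inr (undefined::'a)} \<and> I2 p g \<and> I2 q g" using aff2[of x d] by (simp add: conj_commute)
  next
    fix d d' assume dd: "d \<in> Dirs" "p = Inr (d, undefined)" "d' \<in> Dirs" "q = Inr (d', undefined)"
    then have ne: "d \<noteq> d'" using P by auto
    show "\<exists>!g. g \<in> Inl ` AL \<union> {Inr (undefined::'a)} \<and> I2 p g \<and> I2 q g"
    proof (rule ex1I[of _ "Inr undefined"])
      show "Inr undefined \<in> Inl ` AL \<union> {Inr (undefined::'a)} \<and> I2 p (Inr undefined) \<and> I2 q (Inr undefined)"
        using dd by auto
      fix g assume g: "g \<in> Inl ` AL \<union> {Inr (undefined::'a)} \<and> I2 p g \<and> I2 q g"
      show "g = Inr undefined"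
      proof (cases g)
        case (Inl m)
        then have "m \<in> d" "m \<in> d'" using g dd by auto
        then have "d = d'" using dir_mem_eq dd by blast
        then show ?thesis using ne by simp
      next
        case (Inr u) then show ?thesis using g by auto
      qed
    qed
  qed
qed

lemma proj_ax2: assumes L: "g \<in> psiH ` LH1" "h \<in> psiH ` LH1" "g \<noteq> h"
  shows "\<exists>!p. p \<in> phiH ` PH1 \<and> I2 p g \<and> I2 p h"
proof -
  have LL: "g \<in> Inl ` AL \<union> {Inr (undefined::'a)}" "h \<in> Inl ` AL \<union> {Inr (undefined::'a)}" using L L2_eq by auto
  have PP: "phiH ` PH1 = Inl ` A \<union> (\<lambda>d. Inr (d, undefined::'a)) ` Dirs" by (rule P2_eq)
  have inf: "\<And>m. m \<in> AL \<Longrightarrow> \<exists>!p. p \<in> Inl ` A \<union> (\<lambda>d. Inr (d, undefined::'a)) ` Dirs \<and> I2 p (Inl m) \<and> I2 p (Inr undefined)"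
  proof -
    fix m assume m: "m \<in> AL"
    show "\<exists>!p. p \<in> Inl ` A \<union> (\<lambda>d. Inr (d, undefined::'a)) ` Dirs \<and> I2 p (Inl m) \<and> I2 p (Inr undefined)"
    proof (rule ex1I[of _ "Inr (dir m, undefined)"])
      show "Inr (dir m, undefined) \<in> Inl ` A \<union> (\<lambda>d. Inr (d, undefined::'a)) ` Dirs \<and> I2 (Inr (dir m, undefined)) (Inl m) \<and> I2 (Inr (dir m, undefined)) (Inr undefined)"
        using dir_Dirs[OF m] in_dir[OF m] by auto
      fix p assume p: "p \<in> Inl ` A \<union> (\<lambda>d. Inr (d, undefined::'a)) ` Dirs \<and> I2 p (Inl m) \<and> I2 p (Inr undefined)"
      then obtain d where "p = Inr (d, undefined)" "d \<in> Dirs" "m \<in> d" by auto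
      then show "p = Inr (dir m, undefined)" using dir_of_mem by metis
    qed
  qed
  from LL show ?thesis unfolding PP
  proof (elim UnE imageE singletonE)
    fix m h' assume mh: "m \<in> AL" "g = Inl m" "h' \<in> AL" "h = Inl h'"
    then have ne: "m \<noteq> h'" using L by auto
    show "\<exists>!p. p \<in> Inl ` A \<union> (\<lambda>d. Inr (d, undefined::'a)) ` Dirs \<and> I2 p g \<and> I2 p h"
    proof (cases "apar m h'")
      case True
      show ?thesis
      proof (rule ex1I[of _ "Inr (dir m, undefined)"])
        show "Inr (dir m, undefined) \<in> Inl ` A \<union> (\<lambda>d. Inr (d, undefined::'a)) ` Dirs \<and> I2 (Inr (dir m, undefined)) g \<and> I2 (Inr (dir m, undefined)) h"
          using dir_Dirs mh in_dir True by (auto simp: dir_def)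
        fix p assume p: "p \<in> Inl ` A \<union> (\<lambda>d. Inr (d, undefined::'a)) ` Dirs \<and> I2 p g \<and> I2 p h"
        then consider x where "p = Inl x" "x \<in> A" "AI x m" "AI x h'" | d where "p = Inr (d, undefined)" "d \<in> Dirs" "m \<in> d"
          using mh by auto
        then show "p = Inr (dir m, undefined)"
        proof cases
          case 1 then show ?thesis using apar_meet True ne by blast
        next
          case 2 then show ?thesis using dir_of_mem by metis
        qed
      qed
    next
      case False
      obtain x where x: "x \<in> A" "AI x m" "AI x h'" and xu: "\<And>y. y \<in> A \<Longrightarrow> AI y m \<Longrightarrow> AI y h' \<Longrightarrow> y = x"
        using nonpar_meet1[OF mh(1,3) False] by metis
      show ?thesis
      proof (rule ex1I[of _ "Inl x"])
        show "Inl x \<in> Inl ` A \<union> (\<lambda>d. Inr (d, undefined::'a)) ` Dirs \<and> I2 (Inl x) g \<and> I2 (Inl x) h" using x mh by auto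
        fix p assume p: "p \<in> Inl ` A \<union> (\<lambda>d. Inr (d, undefined::'a)) ` Dirs \<and> I2 p g \<and> I2 p h"
        then consider y where "p = Inl y" "y \<in> A" "AI y m" "AI y h'" | d where "p = Inr (d, undefined)" "d \<in> Dirs" "m \<in> d" "h' \<in> d"
          using mh by auto
        then show "p = Inl x"
        proof cases
          case 1 then show ?thesis using xu by simp
        next
          case 2
          then have "dir m = dir h'" using dir_of_mem by metis
          then show ?thesis using False dir_eq mh by blast
        qed
      qed
    qed
  next
    fix m assume "m \<in> AL" "g = Inl m" "h = Inr undefined"
    then show "\<exists>!p. p \<in> Inl ` A \<union> (\<lambda>d. Inr (d, undefined::'a)) ` Dirs \<and> I2 p g \<and> I2 p h" using inf by simp
  next
    fix m assume "m \<in> AL" "h = Inl m" "g = Inr undefined"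
    then show "\<exists>!p. p \<in> Inl ` A \<union> (\<lambda>d. Inr (d, undefined::'a)) ` Dirs \<and> I2 p g \<and> I2 p h" using inf[of m] by (simp add: conj_commute)
  next
    assume "g = Inr undefined" "h = Inr undefined"
    then show "\<exists>!p. p \<in> Inl ` A \<union> (\<lambda>d. Inr (d, undefined::'a)) ` Dirs \<and> I2 p g \<and> I2 p h" using L by simp
  qed
qed

end

context KAH begin

lemma proj_ax3: "\<exists>a\<in>phiH ` PH1. \<exists>b\<in>phiH ` PH1. \<exists>c\<in>phiH ` PH1. \<exists>d\<in>phiH ` PH1. distinct [a, b, c, d] \<and>
        \<not> collinear3 (psiH ` LH1) I2 a b c \<and> \<not> collinear3 (psiH ` LH1) I2 a b d \<and>
        \<not> collinear3 (psiH ` LH1) I2 a c d \<and> \<not> collinear3 (psiH ` LH1) I2 b c d"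
proof -
  obtain a b where ab: "a \<in> A" "b \<in> A" "a \<noteq> b" using triangle by auto
  define j where "j = join a b"
  have j: "j \<in> AL" "AI a j" "AI b j" using join ab by (auto simp: j_def)
  have "card (Dirs - {dir j}) = t" using Dirs_card dir_Dirs[OF j(1)] Dirs_fin by simp
  then have "card (Dirs - {dir j}) \<ge> 2" using t2 by simp
  then obtain d1 d2 where d: "d1 \<in> Dirs" "d2 \<in> Dirs" "d1 \<noteq> dir j" "d2 \<noteq> dir j" "d1 \<noteq> d2"
    by (auto simp: numeral_2_eq_2 le_Suc_eq card_le_Suc_iff)
  define u :: 'a where "u = undefined"
  have mem: "Inl a \<in> phiH ` PH1" "Inl b \<in> phiH ` PH1" "Inr (d1, u) \<in> phiH ` PH1" "Inr (d2, u) \<in> phiH ` PH1"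
    using ab d P2_eq by (auto simp: u_def)
  have LL: "psiH ` LH1 = Inl ` AL \<union> {Inr (undefined::'a)}" by (rule L2_eq)
  have c1: "\<And>dd. dd \<in> Dirs \<Longrightarrow> dd \<noteq> dir j \<Longrightarrow> \<not> collinear3 (psiH ` LH1) I2 (Inl a) (Inl b) (Inr (dd, u))"
  proof
    fix dd assume dd: "dd \<in> Dirs" "dd \<noteq> dir j" and "collinear3 (psiH ` LH1) I2 (Inl a) (Inl b) (Inr (dd, u))"
    then obtain m where m: "m \<in> AL" "AI a m" "AI b m" "m \<in> dd" unfolding collinear3_def LL by auto
    then have "m = j" using join_uniq ab by (auto simp: j_def)
    then show False using dir_of_mem dd m by metis
  qed
  have c2: "\<And>x. \<not> collinear3 (psiH ` LH1) I2 (Inl x) (Inr (d1, u)) (Inr (d2, u))"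
  proof
    fix x assume "collinear3 (psiH ` LH1) I2 (Inl x) (Inr (d1, u)) (Inr (d2, u))"
    then obtain m where m: "m \<in> AL" "m \<in> d1" "m \<in> d2" unfolding collinear3_def LL by auto
    then show False using dir_mem_eq d by blast
  qed
  show ?thesis
    apply (rule bexI[OF _ mem(1)], rule bexI[OF _ mem(2)], rule bexI[OF _ mem(3)], rule bexI[OF _ mem(4)])
    using c1[of d1] c1[of d2] c2[of a] c2[of b] d ab by auto
qed

lemma PH1: "PH_plane PH1 LH1 IH1"
  unfolding PH_plane_def
proof (intro conjI)
  show "\<forall>p\<in>PH1. \<forall>q\<in>PH1. \<exists>g\<in>LH1. IH1 p g \<and> IH1 q g" by (intro ballI) (rule ax_join)
  show "\<forall>g\<in>LH1. \<forall>h\<in>LH1. \<exists>p\<in>PH1. IH1 p g \<and> IH1 p h" by (intro ballI) (rule ax_meet)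
  have pp: "proj_plane (phiH ` PH1) (psiH ` LH1) I2"
    unfolding proj_plane_def
  proof (intro conjI)
    show "\<forall>p\<in>phiH ` PH1. \<forall>q\<in>phiH ` PH1. p \<noteq> q \<longrightarrow> (\<exists>!g. g \<in> psiH ` LH1 \<and> I2 p g \<and> I2 q g)"
      by (intro ballI impI) (rule proj_ax1)
    show "\<forall>g\<in>psiH ` LH1. \<forall>h\<in>psiH ` LH1. g \<noteq> h \<longrightarrow> (\<exists>!p. p \<in> phiH ` PH1 \<and> I2 p g \<and> I2 p h)"
      by (intro ballI impI) (rule proj_ax2)
  qed (rule proj_ax3)
  have inc2: "\<forall>p\<in>PH1. \<forall>g\<in>LH1. IH1 p g \<longrightarrow> I2 (phiH p) (psiH g)"
  proof (intro ballI impI)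
    fix X L assume X: "X \<in> PH1" and L: "L \<in> LH1" and i: "IH1 X L"
    show "I2 (phiH X) (psiH L)"
    proof (cases L)
      case (Inl g)
      then have g: "g \<in> LK" using L by (auto simp: LH1_def)
      show ?thesis
      proof (cases X)
        case (Inl p) then show ?thesis using i \<open>L = Inl g\<close> inc g X by (auto simp: PH1_def)
      next
        case (Inr c)
        then obtain d a where "X = Inr (d, a)" by (cases c) auto
        then show ?thesis using i \<open>L = Inl g\<close> in_own_dir[OF g] by auto
      qed
    next
      case (Inr n)
      then show ?thesis using i by (cases X) auto
    qed
  qed
  have nb1: "\<forall>p\<in>PH1. \<forall>q\<in>PH1. phiH p = phiH q \<longleftrightarrow> pt_nb PH1 LH1 IH1 p q" using ptnbH by simp
  have nb2: "\<forall>g\<in>LH1. \<forall>h\<in>LH1. psiH g = psiH h \<longleftrightarrow> ln_nb PH1 LH1 IH1 g h" using lnH by simp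
  show "\<exists>(P' :: ('a + 'b set \<times> 'a) set) (L' :: ('b + 'a) set) I' \<phi>' \<psi>'.
        proj_plane P' L' I' \<and> \<phi>' ` PH1 = P' \<and> \<psi>' ` LH1 = L' \<and>
        (\<forall>p\<in>PH1. \<forall>g\<in>LH1. IH1 p g \<longrightarrow> I' (\<phi>' p) (\<psi>' g)) \<and>
        (\<forall>p\<in>PH1. \<forall>q\<in>PH1. \<phi>' p = \<phi>' q \<longleftrightarrow> pt_nb PH1 LH1 IH1 p q) \<and>
        (\<forall>g\<in>LH1. \<forall>h\<in>LH1. \<psi>' g = \<psi>' h \<longleftrightarrow> ln_nb PH1 LH1 IH1 g h)"
    apply (rule exI[of _ "phiH ` PH1"], rule exI[of _ "psiH ` LH1"], rule exI[of _ I2], rule exI[of _ phiH], rule exI[of _ psiH])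
    using pp inc2 nb1 nb2 by simp
qed

lemma trPH1: "tr_PH_plane t t PH1 LH1 IH1"
  unfolding tr_PH_plane_def using PH1 line_card nb_count by auto

definition "N1 = Inr ` A"

lemma nbhd1: "line_nbhd PH1 LH1 IH1 N1"
proof -
  obtain n0 where n0: "n0 \<in> A" using A_ne by blast
  have "N1 = {h\<in>LH1. ln_nb PH1 LH1 IH1 (Inr n0) h}"
  proof
    show "N1 \<subseteq> {h\<in>LH1. ln_nb PH1 LH1 IH1 (Inr n0) h}" using lnH_rr n0 by (auto simp: N1_def LH1_def)
    show "{h\<in>LH1. ln_nb PH1 LH1 IH1 (Inr n0) h} \<subseteq> N1"
    proof
      fix h assume h: "h \<in> {h\<in>LH1. ln_nb PH1 LH1 IH1 (Inr n0) h}"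
      show "h \<in> N1"
      proof (cases h)
        case (Inl g)
        then have "g \<in> LK" using h by (auto simp: LH1_def)
        then show ?thesis using lnH_lr[of g n0] ln_nb_sym_gen[of PH1 LH1 IH1 "Inr n0" "Inl g"] n0 h Inl by auto
      next
        case (Inr n) then show ?thesis using h by (auto simp: N1_def LH1_def)
      qed
    qed
  qed
  then show ?thesis unfolding line_nbhd_def using n0 by (auto simp: LH1_def)
qed

lemma restr1: "{p\<in>PH1. \<forall>g\<in>N1. \<not> IH1 p g} = Inl ` PK" "LH1 - N1 = Inl ` LK"
proof -
  show "LH1 - N1 = Inl ` LK" by (auto simp: LH1_def N1_def)
  show "{p\<in>PH1. \<forall>g\<in>N1. \<not> IH1 p g} = Inl ` PK"
  proof
    show "Inl ` PK \<subseteq> {p\<in>PH1. \<forall>g\<in>N1. \<not> IH1 p g}" by (auto simp: PH1_def N1_def)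
    show "{p\<in>PH1. \<forall>g\<in>N1. \<not> IH1 p g} \<subseteq> Inl ` PK"
    proof
      fix X assume X: "X \<in> {p\<in>PH1. \<forall>g\<in>N1. \<not> IH1 p g}"
      show "X \<in> Inl ` PK"
      proof (cases X)
        case (Inl p) then show ?thesis using X by (auto simp: PH1_def)
      next
        case (Inr c)
        then obtain d a where da: "X = Inr (d, a)" "d \<in> Dirs" "a \<in> A" using X by (auto simp: PH1_def)
        then have "IH1 X (Inr a)" using dl by simp
        then show ?thesis using X da by (auto simp: N1_def)
      qed
    qed
  qed
qed

lemma iso1: "inc_iso {p\<in>PH1. \<forall>g\<in>N1. \<not> IH1 p g} (LH1 - N1) IH1 PK LK IK"
  unfolding restr1 inc_iso_def
proof (intro exI conjI)
  show "bij_betw projl (Inl ` PK) PK" by (rule bij_betw_imageI) (auto simp: inj_on_def image_image)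
  show "bij_betw projl (Inl ` LK) LK" by (rule bij_betw_imageI) (auto simp: inj_on_def image_image)
  show "\<forall>p\<in>Inl ` PK. \<forall>g\<in>Inl ` LK. IH1 p g = IK (projl p) (projl g)" by auto
qed

end

lemma proj_plane_iso:
  assumes pp: "proj_plane P1 L1 I1" and bP: "bij_betw \<sigma> P2 P1" and bL: "bij_betw \<tau> L2 L1"
    and inc: "\<And>x g. x \<in> P2 \<Longrightarrow> g \<in> L2 \<Longrightarrow> I2 x g \<longleftrightarrow> I1 (\<sigma> x) (\<tau> g)"
  shows "proj_plane P2 L2 I2"
proof -
  define I2' where "I2' x g = I1 (\<sigma> x) (\<tau> g)" for x g
  note ppu = pp[unfolded proj_plane_def]
  note ax1 = conjunct1[OF ppu] and ax2 = conjunct1[OF conjunct2[OF ppu]] and ax3 = conjunct2[OF conjunct2[OF ppu]]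
  have iP: "inj_on \<sigma> P2" "\<sigma> ` P2 = P1" and iL: "inj_on \<tau> L2" "\<tau> ` L2 = L1" using bP bL by (auto simp: bij_betw_def)
  have A1: "\<forall>p\<in>P2. \<forall>q\<in>P2. p \<noteq> q \<longrightarrow> (\<exists>!g. g \<in> L2 \<and> I2 p g \<and> I2 q g)"
  proof (intro ballI impI)
    fix p q assume pq: "p \<in> P2" "q \<in> P2" "p \<noteq> q"
    then have "\<sigma> p \<noteq> \<sigma> q" "\<sigma> p \<in> P1" "\<sigma> q \<in> P1" using iP inj_onD by fastforce+
    then obtain h where h: "h \<in> L1" "I1 (\<sigma> p) h" "I1 (\<sigma> q) h"
      and hu: "\<And>h'. h' \<in> L1 \<Longrightarrow> I1 (\<sigma> p) h' \<Longrightarrow> I1 (\<sigma> q) h' \<Longrightarrow> h' = h" using ax1 by metis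
    obtain g where g: "g \<in> L2" "\<tau> g = h" using h iL by blast
    show "\<exists>!g. g \<in> L2 \<and> I2 p g \<and> I2 q g"
    proof (rule ex1I[of _ g])
      show "g \<in> L2 \<and> I2 p g \<and> I2 q g" using g h inc pq by simp
      fix g' assume g': "g' \<in> L2 \<and> I2 p g' \<and> I2 q g'"
      then have "\<tau> g' = h" using hu inc pq iL by blast
      then show "g' = g" using g g' iL(1) inj_onD by metis
    qed
  qed
  have A2: "\<forall>g\<in>L2. \<forall>h\<in>L2. g \<noteq> h \<longrightarrow> (\<exists>!p. p \<in> P2 \<and> I2 p g \<and> I2 p h)"
  proof (intro ballI impI)
    fix g h assume gh: "g \<in> L2" "h \<in> L2" "g \<noteq> h"
    then have "\<tau> g \<noteq> \<tau> h" "\<tau> g \<in> L1" "\<tau> h \<in> L1" using iL inj_onD by fastforce+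
    then obtain x where x: "x \<in> P1" "I1 x (\<tau> g)" "I1 x (\<tau> h)"
      and xu: "\<And>x'. x' \<in> P1 \<Longrightarrow> I1 x' (\<tau> g) \<Longrightarrow> I1 x' (\<tau> h) \<Longrightarrow> x' = x" using ax2 by metis
    obtain p where p: "p \<in> P2" "\<sigma> p = x" using x iP by blast
    show "\<exists>!p. p \<in> P2 \<and> I2 p g \<and> I2 p h"
    proof (rule ex1I[of _ p])
      show "p \<in> P2 \<and> I2 p g \<and> I2 p h" using p x inc gh by simp
      fix p' assume p': "p' \<in> P2 \<and> I2 p' g \<and> I2 p' h"
      then have "\<sigma> p' = x" using xu inc gh iP by blast
      then show "p' = p" using p p' iP(1) inj_onD by metis
    qed
  qed
  have A3: "\<exists>a\<in>P2. \<exists>b\<in>P2. \<exists>c\<in>P2. \<exists>d\<in>P2. distinct [a, b, c, d] \<and>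
        \<not> collinear3 L2 I2 a b c \<and> \<not> collinear3 L2 I2 a b d \<and>
        \<not> collinear3 L2 I2 a c d \<and> \<not> collinear3 L2 I2 b c d"
  proof -
    obtain a b c d where abcd: "a\<in>P1" "b\<in>P1" "c\<in>P1" "d\<in>P1" "distinct [a, b, c, d]"
        "\<not> collinear3 L1 I1 a b c" "\<not> collinear3 L1 I1 a b d" "\<not> collinear3 L1 I1 a c d" "\<not> collinear3 L1 I1 b c d"
      using ax3 by blast
    have ex: "\<And>x. x \<in> P1 \<Longrightarrow> \<exists>x'. x' \<in> P2 \<and> \<sigma> x' = x" using iP(2) by blast
    obtain a' where a': "a'\<in>P2" "\<sigma> a' = a" using ex abcd(1) by blast
    obtain b' where b': "b'\<in>P2" "\<sigma> b' = b" using ex abcd(2) by blast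
    obtain c' where c': "c'\<in>P2" "\<sigma> c' = c" using ex abcd(3) by blast
    obtain d' where d': "d'\<in>P2" "\<sigma> d' = d" using ex abcd(4) by blast
    note pre = a'(1) b'(1) c'(1) d'(1) a'(2) b'(2) c'(2) d'(2)
    have col: "\<And>x y z. x \<in> P2 \<Longrightarrow> y \<in> P2 \<Longrightarrow> z \<in> P2 \<Longrightarrow> collinear3 L2 I2 x y z \<longleftrightarrow> collinear3 L1 I1 (\<sigma> x) (\<sigma> y) (\<sigma> z)"
    proof -
      fix x y z assume xyz: "x \<in> P2" "y \<in> P2" "z \<in> P2"
      show "collinear3 L2 I2 x y z \<longleftrightarrow> collinear3 L1 I1 (\<sigma> x) (\<sigma> y) (\<sigma> z)"
      proof
        assume "collinear3 L2 I2 x y z"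
        then obtain g where "g \<in> L2" "I2 x g" "I2 y g" "I2 z g" by (auto simp: collinear3_def)
        then show "collinear3 L1 I1 (\<sigma> x) (\<sigma> y) (\<sigma> z)" using inc xyz iL unfolding collinear3_def by blast
      next
        assume "collinear3 L1 I1 (\<sigma> x) (\<sigma> y) (\<sigma> z)"
        then obtain h where h: "h \<in> L1" "I1 (\<sigma> x) h" "I1 (\<sigma> y) h" "I1 (\<sigma> z) h" by (auto simp: collinear3_def)
        then obtain g where "g \<in> L2" "\<tau> g = h" using iL by blast
        then show "collinear3 L2 I2 x y z" using inc h xyz unfolding collinear3_def by blast
      qed
    qed
    have "distinct [a', b', c', d']" using abcd(5) pre by auto
    moreover have "\<not> collinear3 L2 I2 a' b' c'" "\<not> collinear3 L2 I2 a' b' d'" "\<not> collinear3 L2 I2 a' c' d'" "\<not> collinear3 L2 I2 b' c' d'"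
      using col pre abcd by simp_all
    ultimately show ?thesis using pre(1-4) by blast
  qed
  show ?thesis unfolding proj_plane_def using A1 A2 A3 by (intro conjI)
qed

locale transp =
  fixes P1 :: "'p set" and L1 :: "'l set" and I1 :: "'p \<Rightarrow> 'l \<Rightarrow> bool"
    and \<alpha> :: "'p \<Rightarrow> 'q" and \<beta> :: "'l \<Rightarrow> 'm"
  assumes ia: "inj_on \<alpha> P1" and ib: "inj_on \<beta> L1"
begin

definition "P2 = \<alpha> ` P1"
definition "L2 = \<beta> ` L1"
definition "I2 x g = I1 (inv_into P1 \<alpha> x) (inv_into L1 \<beta> g)"

lemma T_inc: "p \<in> P1 \<Longrightarrow> g \<in> L1 \<Longrightarrow> I2 (\<alpha> p) (\<beta> g) = I1 p g"
  by (simp add: I2_def ia ib)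

lemma T_ptnb: assumes "p \<in> P1" "q \<in> P1" shows "pt_nb P2 L2 I2 (\<alpha> p) (\<alpha> q) \<longleftrightarrow> pt_nb P1 L1 I1 p q"
proof -
  have "\<alpha> p = \<alpha> q \<longleftrightarrow> p = q" using ia assms inj_on_eq_iff by metis
  moreover have "(\<exists>g\<in>L2. \<exists>h\<in>L2. g \<noteq> h \<and> I2 (\<alpha> p) g \<and> I2 (\<alpha> q) g \<and> I2 (\<alpha> p) h \<and> I2 (\<alpha> q) h)
     \<longleftrightarrow> (\<exists>g\<in>L1. \<exists>h\<in>L1. g \<noteq> h \<and> I1 p g \<and> I1 q g \<and> I1 p h \<and> I1 q h)"
  proof
    assume "\<exists>g\<in>L2. \<exists>h\<in>L2. g \<noteq> h \<and> I2 (\<alpha> p) g \<and> I2 (\<alpha> q) g \<and> I2 (\<alpha> p) h \<and> I2 (\<alpha> q) h"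
    then obtain g h where "g \<in> L1" "h \<in> L1" "\<beta> g \<noteq> \<beta> h" "I2 (\<alpha> p) (\<beta> g)" "I2 (\<alpha> q) (\<beta> g)" "I2 (\<alpha> p) (\<beta> h)" "I2 (\<alpha> q) (\<beta> h)"
      by (auto simp: L2_def)
    then show "\<exists>g\<in>L1. \<exists>h\<in>L1. g \<noteq> h \<and> I1 p g \<and> I1 q g \<and> I1 p h \<and> I1 q h" using T_inc assms by metis
  next
    assume "\<exists>g\<in>L1. \<exists>h\<in>L1. g \<noteq> h \<and> I1 p g \<and> I1 q g \<and> I1 p h \<and> I1 q h"
    then obtain g h where gh: "g \<in> L1" "h \<in> L1" "g \<noteq> h" "I1 p g" "I1 q g" "I1 p h" "I1 q h" by blast
    then have "\<beta> g \<noteq> \<beta> h" using ib inj_on_eq_iff by metis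
    moreover have "\<beta> g \<in> L2" "\<beta> h \<in> L2" using gh by (auto simp: L2_def)
    ultimately show "\<exists>g\<in>L2. \<exists>h\<in>L2. g \<noteq> h \<and> I2 (\<alpha> p) g \<and> I2 (\<alpha> q) g \<and> I2 (\<alpha> p) h \<and> I2 (\<alpha> q) h"
      using gh T_inc assms by metis
  qed
  ultimately show ?thesis unfolding pt_nb_def by simp
qed

lemma T_lnnb: assumes "g \<in> L1" "h \<in> L1" shows "ln_nb P2 L2 I2 (\<beta> g) (\<beta> h) \<longleftrightarrow> ln_nb P1 L1 I1 g h"
proof -
  have "\<beta> g = \<beta> h \<longleftrightarrow> g = h" using ib assms inj_on_eq_iff by metis
  moreover have "(\<exists>p\<in>P2. \<exists>q\<in>P2. p \<noteq> q \<and> I2 p (\<beta> g) \<and> I2 q (\<beta> g) \<and> I2 p (\<beta> h) \<and> I2 q (\<beta> h))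
     \<longleftrightarrow> (\<exists>p\<in>P1. \<exists>q\<in>P1. p \<noteq> q \<and> I1 p g \<and> I1 q g \<and> I1 p h \<and> I1 q h)"
  proof
    assume "\<exists>p\<in>P2. \<exists>q\<in>P2. p \<noteq> q \<and> I2 p (\<beta> g) \<and> I2 q (\<beta> g) \<and> I2 p (\<beta> h) \<and> I2 q (\<beta> h)"
    then obtain p q where "p \<in> P1" "q \<in> P1" "\<alpha> p \<noteq> \<alpha> q" "I2 (\<alpha> p) (\<beta> g)" "I2 (\<alpha> q) (\<beta> g)" "I2 (\<alpha> p) (\<beta> h)" "I2 (\<alpha> q) (\<beta> h)"
      by (auto simp: P2_def)
    then show "\<exists>p\<in>P1. \<exists>q\<in>P1. p \<noteq> q \<and> I1 p g \<and> I1 q g \<and> I1 p h \<and> I1 q h" using T_inc assms by metis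
  next
    assume "\<exists>p\<in>P1. \<exists>q\<in>P1. p \<noteq> q \<and> I1 p g \<and> I1 q g \<and> I1 p h \<and> I1 q h"
    then obtain p q where pq: "p \<in> P1" "q \<in> P1" "p \<noteq> q" "I1 p g" "I1 q g" "I1 p h" "I1 q h" by blast
    then have "\<alpha> p \<noteq> \<alpha> q" using ia inj_on_eq_iff by metis
    moreover have "\<alpha> p \<in> P2" "\<alpha> q \<in> P2" using pq by (auto simp: P2_def)
    ultimately show "\<exists>p\<in>P2. \<exists>q\<in>P2. p \<noteq> q \<and> I2 p (\<beta> g) \<and> I2 q (\<beta> g) \<and> I2 p (\<beta> h) \<and> I2 q (\<beta> h)"
      using pq T_inc assms by metis
  qed
  ultimately show ?thesis unfolding ln_nb_def by simp
qed

lemma T_line_pts: "g \<in> L1 \<Longrightarrow> {x\<in>P2. I2 x (\<beta> g)} = \<alpha> ` {p\<in>P1. I1 p g}"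
  using T_inc by (auto simp: P2_def)

lemma T_nb_pts: "g \<in> L1 \<Longrightarrow> p \<in> P1 \<Longrightarrow>
   {y\<in>P2. I2 y (\<beta> g) \<and> pt_nb P2 L2 I2 (\<alpha> p) y} = \<alpha> ` {q\<in>P1. I1 q g \<and> pt_nb P1 L1 I1 p q}"
  using T_inc T_ptnb by (auto simp: P2_def)

lemma T_PH: assumes H: "PH_plane P1 L1 I1" shows "PH_plane P2 L2 I2"
proof -
  note Hu = H[unfolded PH_plane_def]
  note j1 = conjunct1[OF Hu] and j2 = conjunct1[OF conjunct2[OF Hu]]
  obtain P' :: "'p set" and L' :: "'l set" and I' :: "'p \<Rightarrow> 'l \<Rightarrow> bool" and \<phi> :: "'p \<Rightarrow> 'p" and \<psi> :: "'l \<Rightarrow> 'l" where pp: "proj_plane P' L' I'" and im: "\<phi> ` P1 = P'" "\<psi> ` L1 = L'"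
    and inc: "\<forall>p\<in>P1. \<forall>g\<in>L1. I1 p g \<longrightarrow> I' (\<phi> p) (\<psi> g)"
    and np: "\<forall>p\<in>P1. \<forall>q\<in>P1. \<phi> p = \<phi> q \<longleftrightarrow> pt_nb P1 L1 I1 p q"
    and nl: "\<forall>g\<in>L1. \<forall>h\<in>L1. \<psi> g = \<psi> h \<longleftrightarrow> ln_nb P1 L1 I1 g h"
    using conjunct2[OF conjunct2[OF Hu]] by (elim exE conjE) (rule that; assumption)
  define iA where "iA = inv_into P1 \<alpha>"
  define iB where "iB = inv_into L1 \<beta>"
  define r where "r = inv_into P1 \<phi>"
  define s where "s = inv_into L1 \<psi>"
  define \<phi>2 where "\<phi>2 y = \<alpha> (r (\<phi> (iA y)))" for y
  define \<psi>2 where "\<psi>2 z = \<beta> (s (\<psi> (iB z)))" for z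
  define I'2 where "I'2 y z = I' (\<phi> (iA y)) (\<psi> (iB z))" for y z
  have iAa: "\<And>p. p \<in> P1 \<Longrightarrow> iA (\<alpha> p) = p" using ia by (simp add: iA_def)
  have iBb: "\<And>g. g \<in> L1 \<Longrightarrow> iB (\<beta> g) = g" using ib by (simp add: iB_def)
  have r1: "\<And>p. p \<in> P1 \<Longrightarrow> r (\<phi> p) \<in> P1 \<and> \<phi> (r (\<phi> p)) = \<phi> p"
    by (simp add: r_def inv_into_into f_inv_into_f)
  have s1: "\<And>g. g \<in> L1 \<Longrightarrow> s (\<psi> g) \<in> L1 \<and> \<psi> (s (\<psi> g)) = \<psi> g"
    by (simp add: s_def inv_into_into f_inv_into_f)
  have phi2: "\<And>p. p \<in> P1 \<Longrightarrow> \<phi>2 (\<alpha> p) = \<alpha> (r (\<phi> p))" by (simp add: \<phi>2_def iAa)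
  have psi2: "\<And>g. g \<in> L1 \<Longrightarrow> \<psi>2 (\<beta> g) = \<beta> (s (\<psi> g))" by (simp add: \<psi>2_def iBb)
  have sig: "\<And>p. p \<in> P1 \<Longrightarrow> \<phi> (iA (\<phi>2 (\<alpha> p))) = \<phi> p" using phi2 r1 iAa by simp
  have tau: "\<And>g. g \<in> L1 \<Longrightarrow> \<psi> (iB (\<psi>2 (\<beta> g))) = \<psi> g" using psi2 s1 iBb by simp
  have bP: "bij_betw (\<lambda>y. \<phi> (iA y)) (\<phi>2 ` P2) P'"
  proof (rule bij_betw_imageI)
    show "inj_on (\<lambda>y. \<phi> (iA y)) (\<phi>2 ` P2)"
    proof (rule inj_onI)
      fix y z assume "y \<in> \<phi>2 ` P2" "z \<in> \<phi>2 ` P2" "\<phi> (iA y) = \<phi> (iA z)"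
      then obtain p q where "p \<in> P1" "q \<in> P1" "y = \<phi>2 (\<alpha> p)" "z = \<phi>2 (\<alpha> q)" "\<phi> p = \<phi> q"
        using sig by (auto simp: P2_def)
      then show "y = z" using phi2 by simp
    qed
    show "(\<lambda>y. \<phi> (iA y)) ` \<phi>2 ` P2 = P'" using sig im(1) by (auto simp: P2_def image_image)
  qed
  have bL: "bij_betw (\<lambda>z. \<psi> (iB z)) (\<psi>2 ` L2) L'"
  proof (rule bij_betw_imageI)
    show "inj_on (\<lambda>z. \<psi> (iB z)) (\<psi>2 ` L2)"
    proof (rule inj_onI)
      fix y z assume "y \<in> \<psi>2 ` L2" "z \<in> \<psi>2 ` L2" "\<psi> (iB y) = \<psi> (iB z)"
      then obtain g h where "g \<in> L1" "h \<in> L1" "y = \<psi>2 (\<beta> g)" "z = \<psi>2 (\<beta> h)" "\<psi> g = \<psi> h"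
        using tau by (auto simp: L2_def)
      then show "y = z" using psi2 by simp
    qed
    show "(\<lambda>z. \<psi> (iB z)) ` \<psi>2 ` L2 = L'" using tau im(2) by (auto simp: L2_def image_image)
  qed
  have pp2: "proj_plane (\<phi>2 ` P2) (\<psi>2 ` L2) I'2"
    by (rule proj_plane_iso[OF pp bP bL]) (simp add: I'2_def)
  have inc2: "\<forall>p\<in>P2. \<forall>g\<in>L2. I2 p g \<longrightarrow> I'2 (\<phi>2 p) (\<psi>2 g)"
  proof (intro ballI impI)
    fix x y assume "x \<in> P2" "y \<in> L2" "I2 x y"
    then obtain p g where "p \<in> P1" "g \<in> L1" "x = \<alpha> p" "y = \<beta> g" "I1 p g" using T_inc by (auto simp: P2_def L2_def)
    then show "I'2 (\<phi>2 x) (\<psi>2 y)" using inc sig tau by (simp add: I'2_def)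
  qed
  have np2: "\<forall>p\<in>P2. \<forall>q\<in>P2. \<phi>2 p = \<phi>2 q \<longleftrightarrow> pt_nb P2 L2 I2 p q"
  proof (intro ballI)
    fix x y assume "x \<in> P2" "y \<in> P2"
    then obtain p q where pq: "p \<in> P1" "q \<in> P1" "x = \<alpha> p" "y = \<alpha> q" by (auto simp: P2_def)
    have "\<phi>2 x = \<phi>2 y \<longleftrightarrow> \<phi> p = \<phi> q"
    proof
      assume "\<phi>2 x = \<phi>2 y"
      then have "\<alpha> (r (\<phi> p)) = \<alpha> (r (\<phi> q))" using phi2 pq by simp
      then have "r (\<phi> p) = r (\<phi> q)" using ia r1 pq inj_on_eq_iff by metis
      then show "\<phi> p = \<phi> q" using r1 pq by metis
    next
      assume "\<phi> p = \<phi> q" then show "\<phi>2 x = \<phi>2 y" using phi2 pq by simp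
    qed
    then show "\<phi>2 x = \<phi>2 y \<longleftrightarrow> pt_nb P2 L2 I2 x y" using np T_ptnb pq by simp
  qed
  have nl2: "\<forall>g\<in>L2. \<forall>h\<in>L2. \<psi>2 g = \<psi>2 h \<longleftrightarrow> ln_nb P2 L2 I2 g h"
  proof (intro ballI)
    fix x y assume "x \<in> L2" "y \<in> L2"
    then obtain g h where gh: "g \<in> L1" "h \<in> L1" "x = \<beta> g" "y = \<beta> h" by (auto simp: L2_def)
    have "\<psi>2 x = \<psi>2 y \<longleftrightarrow> \<psi> g = \<psi> h"
    proof
      assume "\<psi>2 x = \<psi>2 y"
      then have "\<beta> (s (\<psi> g)) = \<beta> (s (\<psi> h))" using psi2 gh by simp
      then have "s (\<psi> g) = s (\<psi> h)" using ib s1 gh inj_on_eq_iff by metis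
      then show "\<psi> g = \<psi> h" using s1 gh by metis
    next
      assume "\<psi> g = \<psi> h" then show "\<psi>2 x = \<psi>2 y" using psi2 gh by simp
    qed
    then show "\<psi>2 x = \<psi>2 y \<longleftrightarrow> ln_nb P2 L2 I2 x y" using nl T_lnnb gh by simp
  qed
  have J1: "\<forall>p\<in>P2. \<forall>q\<in>P2. \<exists>g\<in>L2. I2 p g \<and> I2 q g"
  proof (intro ballI)
    fix x y assume "x \<in> P2" "y \<in> P2"
    then obtain p q where pq: "p \<in> P1" "q \<in> P1" "x = \<alpha> p" "y = \<alpha> q" by (auto simp: P2_def)
    then obtain g where "g \<in> L1" "I1 p g" "I1 q g" using j1 by blast
    then show "\<exists>g\<in>L2. I2 x g \<and> I2 y g" using pq T_inc by (intro bexI[of _ "\<beta> g"]) (auto simp: L2_def)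
  qed
  have J2: "\<forall>g\<in>L2. \<forall>h\<in>L2. \<exists>p\<in>P2. I2 p g \<and> I2 p h"
  proof (intro ballI)
    fix x y assume "x \<in> L2" "y \<in> L2"
    then obtain g h where gh: "g \<in> L1" "h \<in> L1" "x = \<beta> g" "y = \<beta> h" by (auto simp: L2_def)
    then obtain p where "p \<in> P1" "I1 p g" "I1 p h" using j2 by blast
    then show "\<exists>p\<in>P2. I2 p x \<and> I2 p y" using gh T_inc by (intro bexI[of _ "\<alpha> p"]) (auto simp: P2_def)
  qed
  show ?thesis unfolding PH_plane_def
    apply (intro conjI J1 J2)
    apply (rule exI[of _ "\<phi>2 ` P2"], rule exI[of _ "\<psi>2 ` L2"], rule exI[of _ I'2], rule exI[of _ \<phi>2], rule exI[of _ \<psi>2])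
    using pp2 inc2 np2 nl2 by simp
qed

lemma T_tr: assumes H: "tr_PH_plane t r P1 L1 I1" shows "tr_PH_plane t r P2 L2 I2"
proof -
  have PH: "PH_plane P1 L1 I1" and c1: "\<forall>g\<in>L1. finite {p\<in>P1. I1 p g} \<and> card {p\<in>P1. I1 p g} = t * (r + 1)"
    and c2: "\<forall>g\<in>L1. \<forall>p\<in>P1. I1 p g \<longrightarrow> card {q\<in>P1. I1 q g \<and> pt_nb P1 L1 I1 p q} = t"
    using H unfolding tr_PH_plane_def by blast+
  have inj: "\<And>S. S \<subseteq> P1 \<Longrightarrow> inj_on \<alpha> S" using ia inj_on_subset by blast
  have C1: "\<forall>g\<in>L2. finite {p\<in>P2. I2 p g} \<and> card {p\<in>P2. I2 p g} = t * (r + 1)"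
  proof
    fix x assume "x \<in> L2"
    then obtain g where g: "g \<in> L1" "x = \<beta> g" by (auto simp: L2_def)
    have "card (\<alpha> ` {p\<in>P1. I1 p g}) = card {p\<in>P1. I1 p g}" by (rule card_image) (rule inj, auto)
    then show "finite {p\<in>P2. I2 p x} \<and> card {p\<in>P2. I2 p x} = t * (r + 1)" using T_line_pts[OF g(1)] c1 g by simp
  qed
  have C2: "\<forall>g\<in>L2. \<forall>p\<in>P2. I2 p g \<longrightarrow> card {q\<in>P2. I2 q g \<and> pt_nb P2 L2 I2 p q} = t"
  proof (intro ballI impI)
    fix x y assume "x \<in> L2" "y \<in> P2" "I2 y x"
    then obtain g p where gp: "g \<in> L1" "x = \<beta> g" "p \<in> P1" "y = \<alpha> p" "I1 p g" using T_inc by (auto simp: L2_def P2_def)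
    have "card (\<alpha> ` {q\<in>P1. I1 q g \<and> pt_nb P1 L1 I1 p q}) = card {q\<in>P1. I1 q g \<and> pt_nb P1 L1 I1 p q}"
      by (rule card_image) (rule inj, auto)
    then show "card {q\<in>P2. I2 q x \<and> pt_nb P2 L2 I2 y q} = t" using T_nb_pts[OF gp(1,3)] c2 gp by simp
  qed
  show ?thesis unfolding tr_PH_plane_def using T_PH[OF PH] C1 C2 by blast
qed

lemma T_nbhd: assumes N: "line_nbhd P1 L1 I1 N" shows "line_nbhd P2 L2 I2 (\<beta> ` N)"
proof -
  obtain g where g: "g \<in> L1" "N = {h\<in>L1. ln_nb P1 L1 I1 g h}" using N unfolding line_nbhd_def by blast
  have "\<beta> ` N = {h\<in>L2. ln_nb P2 L2 I2 (\<beta> g) h}" using g T_lnnb by (auto simp: L2_def)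
  moreover have "\<beta> g \<in> L2" using g by (simp add: L2_def)
  ultimately show ?thesis unfolding line_nbhd_def by blast
qed

lemma T_restr: assumes N: "N \<subseteq> L1"
  shows "{p\<in>P2. \<forall>g\<in>\<beta> ` N. \<not> I2 p g} = \<alpha> ` {p\<in>P1. \<forall>g\<in>N. \<not> I1 p g}" "L2 - \<beta> ` N = \<beta> ` (L1 - N)"
proof -
  show "{p\<in>P2. \<forall>g\<in>\<beta> ` N. \<not> I2 p g} = \<alpha> ` {p\<in>P1. \<forall>g\<in>N. \<not> I1 p g}"
  proof
    show "{p\<in>P2. \<forall>g\<in>\<beta> ` N. \<not> I2 p g} \<subseteq> \<alpha> ` {p\<in>P1. \<forall>g\<in>N. \<not> I1 p g}"
    proof
      fix x assume x: "x \<in> {p\<in>P2. \<forall>g\<in>\<beta> ` N. \<not> I2 p g}"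
      then obtain p where p: "p \<in> P1" "x = \<alpha> p" by (auto simp: P2_def)
      have "\<forall>g\<in>N. \<not> I1 p g" using x p T_inc N by auto
      then show "x \<in> \<alpha> ` {p\<in>P1. \<forall>g\<in>N. \<not> I1 p g}" using p by blast
    qed
    show "\<alpha> ` {p\<in>P1. \<forall>g\<in>N. \<not> I1 p g} \<subseteq> {p\<in>P2. \<forall>g\<in>\<beta> ` N. \<not> I2 p g}"
      using T_inc N by (auto simp: P2_def)
  qed
  show "L2 - \<beta> ` N = \<beta> ` (L1 - N)" using N ib by (auto simp: L2_def inj_on_eq_iff)
qed

lemma T_iso: assumes S: "S \<subseteq> P1" "M \<subseteq> L1" and iso: "inc_iso S M I1 PK LK IK"
  shows "inc_iso (\<alpha> ` S) (\<beta> ` M) I2 PK LK IK"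
proof -
  obtain a b where ab: "bij_betw a S PK" "bij_betw b M LK" "\<forall>p\<in>S. \<forall>g\<in>M. I1 p g \<longleftrightarrow> IK (a p) (b g)"
    using iso unfolding inc_iso_def by blast
  have bA: "bij_betw \<alpha> S (\<alpha> ` S)" using ia S inj_on_subset by (auto simp: bij_betw_def)
  have bB: "bij_betw \<beta> M (\<beta> ` M)" using ib S inj_on_subset by (auto simp: bij_betw_def)
  have "bij_betw (a \<circ> inv_into S \<alpha>) (\<alpha> ` S) PK" using bij_betw_comp_iff bij_betw_inv_into[OF bA] ab(1) bij_betw_trans by blast
  moreover have "bij_betw (b \<circ> inv_into M \<beta>) (\<beta> ` M) LK" using bij_betw_inv_into[OF bB] ab(2) bij_betw_trans by blast
  moreover have "\<forall>p\<in>\<alpha> ` S. \<forall>g\<in>\<beta> ` M. I2 p g \<longleftrightarrow> IK ((a \<circ> inv_into S \<alpha>) p) ((b \<circ> inv_into M \<beta>) g)"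
  proof (intro ballI)
    fix x y assume "x \<in> \<alpha> ` S" "y \<in> \<beta> ` M"
    then obtain p g where pg: "p \<in> S" "g \<in> M" "x = \<alpha> p" "y = \<beta> g" by auto
    have "inv_into S \<alpha> (\<alpha> p) = p" using pg bA by (simp add: bij_betw_def)
    moreover have "inv_into M \<beta> (\<beta> g) = g" using pg bB by (simp add: bij_betw_def)
    moreover have "p \<in> P1" "g \<in> M" "g \<in> L1" using pg S by auto
    ultimately show "I2 x y \<longleftrightarrow> IK ((a \<circ> inv_into S \<alpha>) x) ((b \<circ> inv_into M \<beta>) y)"
      using T_inc pg ab(3) by simp
  qed
  ultimately show ?thesis unfolding inc_iso_def by blast
qed

end


theorem mainTheorem4:
  fixes t :: nat and PK :: "'a set" and LK :: "'b set" and IK :: "'a \<Rightarrow> 'b \<Rightarrow> bool"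
  assumes "t \<ge> 2"
    and "tr_AH_plane t t PK LK IK"
  shows "\<exists>(PH :: ('a + nat) set) (LH :: ('b + nat) set) (IH :: 'a + nat \<Rightarrow> 'b + nat \<Rightarrow> bool) N.
           tr_PH_plane t t PH LH IH \<and> line_nbhd PH LH IH N \<and>
           inc_iso {p\<in>PH. \<forall>g\<in>N. \<not> IH p g} (LH - N) IH PK LK IK"
proof -
  note H = assms(2)[unfolded tr_AH_plane_def AH_plane_def]
  have conn: "\<forall>p\<in>PK. \<forall>q\<in>PK. \<exists>g\<in>LK. IK p g \<and> IK q g" using H by blast
  have c1: "\<forall>g\<in>LK. finite {p\<in>PK. IK p g} \<and> card {p\<in>PK. IK p g} = t * t" using H by blast
  have c2: "\<forall>g\<in>LK. \<forall>p\<in>PK. IK p g \<longrightarrow> card {q\<in>PK. IK q g \<and> pt_nb PK LK IK p q} = t" using H by blast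
  obtain A :: "'a set" and AL :: "'b set" and AI :: "'a \<Rightarrow> 'b \<Rightarrow> bool" and \<phi> :: "'a \<Rightarrow> 'a" and \<psi> :: "'b \<Rightarrow> 'b"
    where W: "affine_plane A AL AI" "\<phi> ` PK = A" "\<psi> ` LK = AL"
        "\<forall>p\<in>PK. \<forall>g\<in>LK. IK p g \<longrightarrow> AI (\<phi> p) (\<psi> g)"
        "\<forall>p\<in>PK. \<forall>q\<in>PK. \<phi> p = \<phi> q \<longleftrightarrow> pt_nb PK LK IK p q"
        "\<forall>g\<in>LK. \<forall>h\<in>LK. ln_nb PK LK IK g h \<longrightarrow> \<psi> g = \<psi> h"
        "\<forall>g\<in>LK. \<forall>h\<in>LK. \<not> (\<exists>p\<in>PK. IK p g \<and> IK p h) \<longrightarrow> aff_parallel A AI (\<psi> g) (\<psi> h)"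
    using conjunct2[OF conjunct1[OF H]] by (elim exE conjE) (rule that; assumption)
  interpret K: KAH t PK LK IK A AL AI \<phi> \<psi>
    by (unfold_locales) (use assms(1) conn c1 c2 W in auto)
  obtain e1 :: "'b set \<times> 'a \<Rightarrow> nat" where e1: "inj_on e1 (K.Dirs \<times> A)"
    using finite_imp_inj_to_nat_seg[of "K.Dirs \<times> A"] K.Dirs_fin K.A_fin by blast
  obtain e2 :: "'a \<Rightarrow> nat" where e2: "inj_on e2 A"
    using finite_imp_inj_to_nat_seg[of A] K.A_fin by blast
  define \<alpha> :: "'a + 'b set \<times> 'a \<Rightarrow> 'a + nat" where "\<alpha> = map_sum id e1"
  define \<beta> :: "'b + 'a \<Rightarrow> 'b + nat" where "\<beta> = map_sum id e2"
  have ia: "inj_on \<alpha> K.PH1"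
  proof (rule inj_onI)
    fix x y assume xy: "x \<in> K.PH1" "y \<in> K.PH1" "\<alpha> x = \<alpha> y"
    show "x = y"
    proof (cases x; cases y)
      fix c c' assume "x = Inr c" "y = Inr c'"
      then show "x = y" using xy inj_onD[OF e1, of c c'] by (auto simp: \<alpha>_def K.PH1_def)
    qed (use xy in \<open>auto simp: \<alpha>_def\<close>)
  qed
  have ib: "inj_on \<beta> K.LH1"
  proof (rule inj_onI)
    fix x y assume xy: "x \<in> K.LH1" "y \<in> K.LH1" "\<beta> x = \<beta> y"
    show "x = y"
    proof (cases x; cases y)
      fix c c' assume "x = Inr c" "y = Inr c'"
      then show "x = y" using xy inj_onD[OF e2, of c c'] by (auto simp: \<beta>_def K.LH1_def)
    qed (use xy in \<open>auto simp: \<beta>_def\<close>)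
  qed
  interpret T: transp K.PH1 K.LH1 K.IH1 \<alpha> \<beta> by (unfold_locales) (rule ia, rule ib)
  have N1: "K.N1 \<subseteq> K.LH1" by (auto simp: K.N1_def K.LH1_def)
  have "tr_PH_plane t t T.P2 T.L2 T.I2" by (rule T.T_tr[OF K.trPH1])
  moreover have "line_nbhd T.P2 T.L2 T.I2 (\<beta> ` K.N1)" by (rule T.T_nbhd[OF K.nbhd1])
  moreover have "inc_iso {p\<in>T.P2. \<forall>g\<in>\<beta> ` K.N1. \<not> T.I2 p g} (T.L2 - \<beta> ` K.N1) T.I2 PK LK IK"
    unfolding T.T_restr[OF N1] by (rule T.T_iso[OF _ _ K.iso1]) auto
  ultimately show ?thesis by blast
qed


end
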